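(* Let $p$ be a prime number and let $1\to F\to H\to\bar H\to1$ be an exact sequence of finite groups such that $\bar H$ is abelian and generated by $r$ elements. Suppose that the $p$-Sylow subgroup $F_p$ of $F$ is normal in $F$ and $F_p\cong(\mathbb{Z}/p\mathbb{Z})^m$ for some non-negative integer $m$. Suppose further that $|F|\le B\cdot|F_p|^e$ for some positive constants $B$ and $e$, and that $F$ is generated by $F_p$ together with $s$ additional elements. Then $H$ contains a characteristic abelian subgroup of order coprime to $p$ and index at most $B^{r+s+1}\cdot|H_p|^{e(r+s+1)+r+1}$, where $H_p$ is a $p$-Sylow subgroup of $H$. *)

theory Defs
  imports "HOL-Algebra.Algebra"
begin

definition sylow_subgroup :: "('a, 'b) monoid_scheme \<Rightarrow> nat \<Rightarrow> 'a set \<Rightarrow> bool" where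
  "sylow_subgroup G p P \<longleftrightarrow> subgroup P G \<and> (\<exists>k. card P = p ^ k) \<and> \<not> p dvd (order G div card P)"

definition characteristic_subgroup :: "('a, 'b) monoid_scheme \<Rightarrow> 'a set \<Rightarrow> bool" where
  "characteristic_subgroup G A \<longleftrightarrow> subgroup A G \<and> (\<forall>\<phi> \<in> iso G G. \<phi> ` A = A)"

end

theory Submission
  imports Defs
begin


lemma preimage_subgroup:
  assumes "group G" "f \<in> hom G G" "subgroup S G"
  shows "subgroup {x \<in> carrier G. f x \<in> S} G"
proof -
  interpret group G by fact
  interpret gh: group_hom G G f using assms by (simp add: group_hom_def group_hom_axioms_def)
  show ?thesis
    apply (rule subgroup.intro)
    using assms(3) by (auto simp: subgroup.one_closed subgroup.m_closed subgroup.m_inv_closed)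
qed

lemma subgroup_pow_closed:
  assumes "subgroup S G" "x \<in> S" shows "x [^]\<^bsub>G\<^esub> (k::nat) \<in> S"
  using assms by (induction k) (auto simp: subgroup.one_closed subgroup.m_closed)

locale lin_aut = comm_group G for G (structure) +
  fixes \<tau> :: "'a \<Rightarrow> 'a" and p n :: nat
  assumes tau_hom: "\<tau> \<in> hom G G"
  and p_prime: "Factorial_Ring.prime p"
  and exp_p: "\<And>v. v \<in> carrier G \<Longrightarrow> v [^] p = \<one>"
  and n_pos: "n > 0" and cop: "coprime n p"
  and tau_n: "\<And>v. v \<in> carrier G \<Longrightarrow> (\<tau> ^^ n) v = v"
  and fin: "finite (carrier G)"
begin

lemma tau_closed[simp]: "v \<in> carrier G \<Longrightarrow> \<tau> v \<in> carrier G"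
  using tau_hom by (auto simp: hom_def)
lemma tau_mult: "x \<in> carrier G \<Longrightarrow> y \<in> carrier G \<Longrightarrow> \<tau> (x \<otimes> y) = \<tau> x \<otimes> \<tau> y"
  using tau_hom by (auto simp: hom_def)

lemma T_closed[simp]: "v \<in> carrier G \<Longrightarrow> (\<tau>^^k) v \<in> carrier G"
  by (induction k) auto
lemma T_mult: "x \<in> carrier G \<Longrightarrow> y \<in> carrier G \<Longrightarrow> (\<tau>^^k) (x \<otimes> y) = (\<tau>^^k) x \<otimes> (\<tau>^^k) y"
  by (induction k) (auto simp: tau_mult)
lemma T_hom: "(\<tau>^^k) \<in> hom G G"
  by (rule homI) (auto simp: T_mult)
lemma T_inv: "x \<in> carrier G \<Longrightarrow> (\<tau>^^k) (inv x) = inv ((\<tau>^^k) x)"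
  using group_hom.hom_inv[of G G "\<tau>^^k"] T_hom
  by (simp add: group_hom_def group_hom_axioms_def is_group)
lemma T_add: "(\<tau>^^(a+b)) v = (\<tau>^^a) ((\<tau>^^b) v)"
  by (simp add: funpow_add)
lemma T_n_mult: "v \<in> carrier G \<Longrightarrow> (\<tau>^^(n*j)) v = v"
proof (induction j)
  case (Suc j)
  have "(\<tau>^^(n*Suc j)) v = (\<tau>^^n) ((\<tau>^^(n*j)) v)"
    by (metis T_add mult_Suc_right)
  then show ?case using Suc by (simp add: tau_n)
qed simp

definition invs :: "'a set \<Rightarrow> bool" where
  "invs U \<longleftrightarrow> subgroup U G \<and> (\<forall>u\<in>U. \<tau> u \<in> U)"

lemma invs_T: "invs U \<Longrightarrow> u \<in> U \<Longrightarrow> (\<tau>^^k) u \<in> U"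
  by (induction k) (auto simp: invs_def)

lemma invs_sub: "invs U \<Longrightarrow> U \<subseteq> carrier G"
  by (auto simp: invs_def subgroup_def)

lemma T_back: assumes "invs U" "v \<in> carrier G" "(\<tau>^^k) v \<in> U" shows "v \<in> U"
proof -
  have "n*k = (n*k - k) + k" using n_pos by (simp add: le_add_diff_inverse2)
  then have "v = (\<tau>^^(n*k - k)) ((\<tau>^^k) v)"
    using T_n_mult[OF assms(2), of k] T_add by metis
  then show ?thesis using invs_T[OF assms(1) assms(3)] by metis
qed

definition eqv :: "'a set \<Rightarrow> 'a \<Rightarrow> 'a \<Rightarrow> bool" where
  "eqv U x y \<longleftrightarrow> x \<otimes> inv y \<in> U"

lemma eqv_refl: "subgroup U G \<Longrightarrow> x \<in> carrier G \<Longrightarrow> eqv U x x"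
  by (simp add: eqv_def subgroup.one_closed)
lemma eqv_sym: "subgroup U G \<Longrightarrow> x \<in> carrier G \<Longrightarrow> y \<in> carrier G \<Longrightarrow> eqv U x y \<Longrightarrow> eqv U y x"
  unfolding eqv_def
  by (metis inv_mult_group inv_inv subgroup.m_inv_closed inv_closed)
lemma eqv_trans: "subgroup U G \<Longrightarrow> x \<in> carrier G \<Longrightarrow> y \<in> carrier G \<Longrightarrow> z \<in> carrier G \<Longrightarrow>
   eqv U x y \<Longrightarrow> eqv U y z \<Longrightarrow> eqv U x z"
  unfolding eqv_def
proof -
  assume a: "subgroup U G" "x \<in> carrier G" "y \<in> carrier G" "z \<in> carrier G" "x \<otimes> inv y \<in> U" "y \<otimes> inv z \<in> U"
  have "(x \<otimes> inv y) \<otimes> (y \<otimes> inv z) = x \<otimes> (inv y \<otimes> y) \<otimes> inv z" using a by (metis inv_closed m_assoc m_closed)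
  then have "x \<otimes> inv z = (x \<otimes> inv y) \<otimes> (y \<otimes> inv z)" using a by simp
  then show "x \<otimes> inv z \<in> U" using a subgroup.m_closed by metis
qed
lemma eqv_mult: "subgroup U G \<Longrightarrow> x \<in> carrier G \<Longrightarrow> y \<in> carrier G \<Longrightarrow> x' \<in> carrier G \<Longrightarrow> y' \<in> carrier G \<Longrightarrow>
   eqv U x y \<Longrightarrow> eqv U x' y' \<Longrightarrow> eqv U (x \<otimes> x') (y \<otimes> y')"
  unfolding eqv_def
proof -
  assume a: "subgroup U G" "x \<in> carrier G" "y \<in> carrier G" "x' \<in> carrier G" "y' \<in> carrier G" "x \<otimes> inv y \<in> U" "x' \<otimes> inv y' \<in> U"
  have "x \<otimes> x' \<otimes> inv (y \<otimes> y') = (x \<otimes> inv y) \<otimes> (x' \<otimes> inv y')" using a by (simp add: m_ac inv_mult)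
  then show "x \<otimes> x' \<otimes> inv (y \<otimes> y') \<in> U" using a subgroup.m_closed by metis
qed
lemma eqv_T: "invs U \<Longrightarrow> x \<in> carrier G \<Longrightarrow> y \<in> carrier G \<Longrightarrow> eqv U x y \<Longrightarrow> eqv U ((\<tau>^^k) x) ((\<tau>^^k) y)"
  unfolding eqv_def using invs_T[of U "x \<otimes> inv y" k] by (simp add: T_mult T_inv)
lemma eqv_in: "subgroup U G \<Longrightarrow> x \<in> carrier G \<Longrightarrow> eqv U x \<one> \<longleftrightarrow> x \<in> U"
  by (simp add: eqv_def)

definition good :: "'a set \<Rightarrow> 'a set \<Rightarrow> nat \<Rightarrow> bool" where
  "good U V k \<longleftrightarrow> (\<forall>v\<in>V. eqv U ((\<tau>^^k) v) v)"

lemma good_add: assumes "invs U" "invs V" "good U V a" "good U V b" shows "good U V (a+b)"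
  unfolding good_def
proof
  fix v assume v: "v \<in> V"
  have sU: "subgroup U G" using assms(1) invs_def by auto
  have vc: "v \<in> carrier G" using v invs_sub[OF assms(2)] by auto
  have bv: "(\<tau>^^b) v \<in> V" using invs_T[OF assms(2) v] .
  have "eqv U ((\<tau>^^a) ((\<tau>^^b) v)) ((\<tau>^^b) v)" using assms(3) bv good_def by auto
  moreover have "eqv U ((\<tau>^^b) v) v" using assms(4) v good_def by auto
  ultimately show "eqv U ((\<tau>^^(a+b)) v) v" using eqv_trans[OF sU] vc by (metis T_add T_closed)
qed

lemma good_sub: assumes "invs U" "invs V" "good U V (a+b)" "good U V a" shows "good U V b"
  unfolding good_def
proof
  fix v assume v: "v \<in> V"
  have sU: "subgroup U G" using assms(1) invs_def by auto
  have vc: "v \<in> carrier G" using v invs_sub[OF assms(2)] by auto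
  have bv: "(\<tau>^^b) v \<in> V" using invs_T[OF assms(2) v] .
  have "eqv U ((\<tau>^^a) ((\<tau>^^b) v)) ((\<tau>^^b) v)" using assms(4) bv good_def by auto
  moreover have "eqv U ((\<tau>^^(a+b)) v) v" using assms(3) v good_def by auto
  ultimately show "eqv U ((\<tau>^^b) v) v" using eqv_trans[OF sU] eqv_sym[OF sU] vc by (metis T_add T_closed)
qed

lemma good_mult: assumes "invs U" "invs V" "good U V a" shows "good U V (a*j)"
proof (induction j)
  case 0
  then show ?case using assms by (auto simp: good_def invs_def eqv_refl subgroup_def)
next
  case (Suc j)
  then show ?case using good_add[OF assms(1,2) assms(3) Suc] by (simp add: add.commute)
qed

lemma good_n: assumes "invs U" "invs V" shows "good U V n"
  using assms T_n_mult[of _ 1] by (auto simp: good_def invs_def eqv_refl subgroup_def)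

lemma good_gcd: assumes "invs U" "invs V" "good U V a" "good U V b" "a \<noteq> 0"
  shows "good U V (gcd a b)"
proof -
  obtain x y where xy: "a * x = b * y + gcd a b" using bezout_nat[OF assms(5)] by blast
  have "good U V (b*y + gcd a b)" using good_mult[OF assms(1,2,3), of x] xy by simp
  then show ?thesis using good_sub[OF assms(1,2)] good_mult[OF assms(1,2,4)] by blast
qed

lemma hom_twist: "(\<lambda>w. (\<tau>^^k) w \<otimes> inv w) \<in> hom G G"
  by (rule homI) (auto simp: T_mult inv_mult m_ac)

lemma eqv_T_back: "invs U \<Longrightarrow> x \<in> carrier G \<Longrightarrow> y \<in> carrier G \<Longrightarrow> eqv U ((\<tau>^^k) x) ((\<tau>^^k) y) \<Longrightarrow> eqv U x y"
  unfolding eqv_def using T_back[of U "x \<otimes> inv y" k] by (simp add: T_mult T_inv)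

lemma swap_eq: "a \<in> carrier G \<Longrightarrow> b \<in> carrier G \<Longrightarrow> c \<in> carrier G \<Longrightarrow> d \<in> carrier G \<Longrightarrow>
   a \<otimes> b = c \<otimes> d \<Longrightarrow> b \<otimes> inv d = inv a \<otimes> c"
  by (metis inv_solve_left inv_solve_right m_assoc inv_closed m_closed)

lemma cyclic_step:
  assumes U: "invs U" and V: "invs V" and UV: "U \<subseteq> V" and v: "v \<in> V" "v \<notin> U"
  shows "\<exists>W a. invs W \<and> U \<subseteq> W \<and> W \<subseteq> V \<and> v \<in> W \<and> a > 0 \<and> a * card U \<le> card W \<and> good U W a"
proof -
  have sU: "subgroup U G" and sV: "subgroup V G" using U V invs_def by auto
  have vc: "v \<in> carrier G" using v invs_sub[OF V] by auto
  define P where "P k \<longleftrightarrow> 0 < k \<and> eqv U ((\<tau>^^k) v) v" for k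
  have Pn: "P n" using n_pos tau_n vc eqv_refl[OF sU vc] by (simp add: P_def)
  define od where "od = (LEAST k. P k)"
  have Po: "P od" using LeastI[of P n] Pn od_def by auto
  have o_min: "\<And>d. 0 < d \<Longrightarrow> d < od \<Longrightarrow> \<not> eqv U ((\<tau>^^d) v) v"
    using not_less_Least[of _ P] od_def P_def by auto
  define S where "S = U \<union> range (\<lambda>k. (\<tau>^^k) v)"
  have S_sub: "S \<subseteq> carrier G" using invs_sub[OF U] vc S_def by auto
  define W where "W = generate G S"
  have sW: "subgroup W G" using generate_is_subgroup[OF S_sub] W_def by simp
  have SW: "S \<subseteq> W" unfolding W_def by (auto intro: generate.incl)
  have W_V: "W \<subseteq> V" unfolding W_def
    apply (rule generate_subgroup_incl[OF _ sV])
    using UV v(1) invs_T[OF V v(1)] unfolding S_def by blast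
  have inv_W: "invs W"
  proof -
    have "subgroup {x \<in> carrier G. \<tau> x \<in> W} G" by (rule preimage_subgroup[OF is_group tau_hom sW])
    moreover have "S \<subseteq> {x \<in> carrier G. \<tau> x \<in> W}"
    proof
      fix x assume xS: "x \<in> S"
      show "x \<in> {x \<in> carrier G. \<tau> x \<in> W}"
      proof (cases "x \<in> U")
        case True then show ?thesis using U SW S_sub S_def invs_def xS by auto
      next
        case False then obtain k where xk: "x = (\<tau>^^k) v" using xS S_def by auto
        have e: "\<tau> x = (\<tau>^^(Suc k)) v" by (simp add: xk)
        have "(\<tau>^^(Suc k)) v \<in> W" using SW S_def by blast
        then have "\<tau> x \<in> W" using e by simp
        moreover have "x \<in> carrier G" using xk vc by simp
        ultimately show ?thesis by simp
      qed
    qed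
    ultimately have "W \<subseteq> {x \<in> carrier G. \<tau> x \<in> W}" unfolding W_def by (rule generate_subgroup_incl[rotated])
    then show ?thesis using sW invs_def by auto
  qed
  have good_o: "good U W od"
  proof -
    have "subgroup {x \<in> carrier G. (\<tau>^^od) x \<otimes> inv x \<in> U} G"
      by (rule preimage_subgroup[OF is_group hom_twist sU])
    moreover have "S \<subseteq> {x \<in> carrier G. (\<tau>^^od) x \<otimes> inv x \<in> U}"
    proof
      fix x assume xS: "x \<in> S"
      show "x \<in> {x \<in> carrier G. (\<tau>^^od) x \<otimes> inv x \<in> U}"
      proof (cases "x \<in> U")
        case True then show ?thesis using U invs_T[OF U True, of od] invs_sub[OF U] sU subgroup.m_closed subgroup.m_inv_closed by fastforce
      next
        case False then obtain k where xk: "x = (\<tau>^^k) v" using xS S_def by auto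
        have "eqv U ((\<tau>^^k) ((\<tau>^^od) v)) ((\<tau>^^k) v)" using eqv_T[OF U _ vc] Po P_def vc by auto
        then have "eqv U ((\<tau>^^od) x) x" using xk T_add add.commute by metis
        then show ?thesis using xk vc eqv_def by auto
      qed
    qed
    ultimately have "W \<subseteq> {x \<in> carrier G. (\<tau>^^od) x \<otimes> inv x \<in> U}" unfolding W_def by (rule generate_subgroup_incl[rotated])
    then show ?thesis by (auto simp: good_def eqv_def)
  qed
  define c where "c k = (if k < od then (\<tau>^^k) v else \<one>)" for k
  have c_in: "c k \<in> W" for k using SW S_def sW subgroup.one_closed c_def by auto
  have c_c: "c k \<in> carrier G" for k using c_in sW subgroup.subset by blast
  have Tnot: "(\<tau>^^k) v \<notin> U" for k using T_back[OF U vc] v by blast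
  have neq: "\<not> eqv U ((\<tau>^^i) v) ((\<tau>^^j) v)" if "i < j" "j < od" for i j
  proof
    assume "eqv U ((\<tau>^^i) v) ((\<tau>^^j) v)"
    then have "eqv U ((\<tau>^^i) ((\<tau>^^(j-i)) v)) ((\<tau>^^i) v)"
      using eqv_sym[OF sU] vc that T_add[of i "j-i" v] by simp
    then have "eqv U ((\<tau>^^(j-i)) v) v" using eqv_T_back[OF U _ vc] vc by simp
    then show False using o_min that by simp
  qed
  have c_dist: "i = j" if "i \<le> od" "j \<le> od" "c i \<otimes> inv (c j) \<in> U" for i j
  proof (cases "i < od")
    case True
    show ?thesis
    proof (cases "j < od")
      case True
      have e: "eqv U ((\<tau>^^i) v) ((\<tau>^^j) v)" using \<open>i < od\<close> True that(3) c_def eqv_def by simp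
      show ?thesis
      proof (rule ccontr)
        assume "i \<noteq> j"
        then consider "i < j" | "j < i" by linarith
        then show False
        proof cases
          case 1 then show False using neq[of i j] e True by blast
        next
          case 2 then show False using neq[of j i] eqv_sym[OF sU _ _ e] vc \<open>i < od\<close> by simp
        qed
      qed
    next
      case False
      then show ?thesis using \<open>i < od\<close> that Tnot c_def vc by auto
    qed
  next
    case False
    show ?thesis
    proof (cases "j < od")
      case True
      then have "inv ((\<tau>^^j) v) \<in> U" using False that(3) c_def vc by auto
      then have "(\<tau>^^j) v \<in> U" using sU vc by (metis T_closed inv_inv subgroup.m_inv_closed)
      then show ?thesis using Tnot by blast
    next
      case False
      then show ?thesis using \<open>\<not> i < od\<close> that by auto
    qed
  qed
  define f where "f = (\<lambda>(k, u). u \<otimes> c k)"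
  have inj: "inj_on f ({..od} \<times> U)"
  proof (rule inj_onI)
    fix x y assume x: "x \<in> {..od} \<times> U" and y: "y \<in> {..od} \<times> U" and fxy: "f x = f y"
    obtain i u where xi: "x = (i, u)" by fastforce
    obtain j u' where yj: "y = (j, u')" by fastforce
    have uc: "u \<in> carrier G" "u' \<in> carrier G" using x y xi yj invs_sub[OF U] by auto
    have "u \<otimes> c i = u' \<otimes> c j" using fxy xi yj f_def by simp
    then have "c i \<otimes> inv (c j) = inv u \<otimes> u'" using swap_eq uc c_c by blast
    moreover have "inv u \<otimes> u' \<in> U" using x y xi yj sU subgroup.m_closed subgroup.m_inv_closed by fastforce
    ultimately have "i = j" using c_dist x y xi yj by auto
    then show "x = y" using \<open>u \<otimes> c i = u' \<otimes> c j\<close> xi yj uc c_c by auto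
  qed
  have img: "f ` ({..od} \<times> U) \<subseteq> W"
  proof
    fix x assume "x \<in> f ` ({..od} \<times> U)"
    then obtain k u where "u \<in> U" "x = u \<otimes> c k" using f_def by auto
    moreover have "u \<in> W" using \<open>u \<in> U\<close> SW S_def by auto
    ultimately show "x \<in> W" using c_in sW subgroup.m_closed by metis
  qed
  have finW: "finite W" using sW fin subgroup.subset finite_subset by blast
  have "card ({..od} \<times> U) \<le> card W" using card_inj_on_le[OF inj img finW] .
  moreover have "card ({..od} \<times> U) = Suc od * card U" by (simp add: card_cartesian_product)
  ultimately have "od * card U \<le> card W" by simp
  moreover have "v \<in> W" using SW S_def by (metis UnCI funpow_0 rangeI subsetD)
  ultimately show ?thesis using inv_W SW S_def W_V good_o Po P_def by blast
qed


lemma main_ind: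
  assumes "invs U" "invs V" "U \<subseteq> V"
  shows "\<exists>k>0. k * card U \<le> card V \<and> good U V k"
  using assms
proof (induction "card V - card U" arbitrary: U rule: less_induct)
  case less
  have sU: "subgroup U G" using less.prems invs_def by auto
  have sV: "subgroup V G" using less.prems invs_def by auto
  have finV: "finite V" using sV fin subgroup.subset finite_subset by blast
  show ?case
  proof (cases "U = V")
    case True
    have "good U V 1"
      unfolding good_def eqv_def
    proof
      fix v assume "v \<in> V"
      then have "\<tau> v \<in> U" "v \<in> U" using less.prems(1) True invs_def by auto
      then show "(\<tau>^^1) v \<otimes> inv v \<in> U" using sU subgroup.m_closed subgroup.m_inv_closed by fastforce
    qed
    then show ?thesis using True by (intro exI[of _ 1]) simp
  next
    case False
    then obtain v where v: "v \<in> V" "v \<notin> U" using less.prems(3) by blast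
    obtain W a where W: "invs W" "U \<subseteq> W" "W \<subseteq> V" "v \<in> W" "a > 0" "a * card U \<le> card W" "good U W a"
      using cyclic_step[OF less.prems v] by blast
    have finW: "finite W" using W(3) finV finite_subset by blast
    have "card U < card W" using psubset_card_mono[OF finW] W(2,4) v(2) by blast
    moreover have "card W \<le> card V" using card_mono[OF finV W(3)] .
    ultimately have "card V - card W < card V - card U" by arith
    then obtain b where b: "b > 0" "b * card W \<le> card V" "good W V b"
      using less.hyps[of W] W(1) less.prems(2) W(3) by blast
    define c where "c = a * b"
    have gUW: "good U W c" using good_mult[OF less.prems(1) W(1) W(7)] c_def by auto
    have gWV: "good W V c" using good_mult[OF W(1) less.prems(2) b(3), of a] c_def by (simp add: mult.commute)
    have sW: "subgroup W G" using W(1) invs_def by auto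
    have gp: "good U V (c * p)"
      unfolding good_def
    proof
      fix x assume x: "x \<in> V"
      have xc: "x \<in> carrier G" using x sV subgroup.subset by blast
      define w where "w = (\<tau>^^c) x \<otimes> inv x"
      have wW: "w \<in> W" using gWV x good_def eqv_def w_def by auto
      have wc: "w \<in> carrier G" using wW sW subgroup.subset by blast
      have Tcx: "(\<tau>^^c) x = w \<otimes> x" using w_def xc by (simp add: m_assoc)
      have step: "eqv U ((\<tau>^^(c*j)) x) (w [^] j \<otimes> x)" for j
      proof (induction j)
        case 0 then show ?case using eqv_refl[OF sU xc] xc by simp
      next
        case (Suc j)
        have wj: "w [^] j \<in> W" using subgroup_pow_closed[OF sW wW] .
        have wjc: "w [^] j \<in> carrier G" using wc by simp
        have e0: "(\<tau>^^(c*Suc j)) x = (\<tau>^^c) ((\<tau>^^(c*j)) x)" by (metis T_add mult_Suc_right)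
        have e1: "eqv U ((\<tau>^^c) ((\<tau>^^(c*j)) x)) ((\<tau>^^c) (w [^] j \<otimes> x))"
          using eqv_T[OF less.prems(1) _ _ Suc.IH] xc wjc by simp
        have e1': "(\<tau>^^c) (w [^] j \<otimes> x) = (\<tau>^^c) (w[^]j) \<otimes> (w \<otimes> x)"
          using T_mult[OF wjc xc] Tcx by simp
        have e2: "eqv U ((\<tau>^^c) (w[^]j)) (w[^]j)" using gUW wj good_def by auto
        have e3: "eqv U ((\<tau>^^c) (w[^]j) \<otimes> (w \<otimes> x)) (w[^]j \<otimes> (w \<otimes> x))"
          using eqv_mult[OF sU _ _ _ _ e2 eqv_refl[OF sU, of "w \<otimes> x"]] wjc wc xc by simp
        have e4: "w[^]j \<otimes> (w \<otimes> x) = w [^] Suc j \<otimes> x" using wc xc by (simp add: m_assoc)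
        show ?case using eqv_trans[OF sU _ _ _ e1 e3[folded e1']] e0 e4 xc wc by simp
      qed
      have "w [^] p = \<one>" using exp_p wc by simp
      then show "eqv U ((\<tau>^^(c*p)) x) x" using step[of p] xc by simp
    qed
    have gn: "good U V n" using good_n[OF less.prems(1,2)] .
    have p0: "p > 0" using p_prime prime_gt_0_nat by blast
    have c0: "c > 0" using W(5) b(1) c_def by simp
    define k where "k = gcd (c*p) n"
    have gk: "good U V k" using good_gcd[OF less.prems(1,2) gp gn] c0 p0 k_def by simp
    have "k dvd n" using k_def by simp
    then have "coprime k p" using cop coprime_imp_coprime dvd_trans by (metis coprime_commute dvd_refl)
    moreover have "k dvd c * p" using k_def by simp
    ultimately have "k dvd c" using coprime_dvd_mult_left_iff by blast
    then have kc: "k \<le> c" using c0 dvd_imp_le by blast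
    have k0: "k > 0" using k_def n_pos by simp
    have "k * card U \<le> c * card U" using kc by simp
    also have "\<dots> = b * (a * card U)" using c_def by simp
    also have "\<dots> \<le> b * card W" using W(6) by simp
    also have "\<dots> \<le> card V" using b(2) .
    finally show ?thesis using gk k0 by blast
  qed
qed

lemma order_bound: "\<exists>k>0. k \<le> card (carrier G) \<and> (\<forall>v\<in>carrier G. (\<tau>^^k) v = v)"
proof -
  have i1: "invs {\<one>}" unfolding invs_def using triv_subgroup tau_hom
    by (simp add: group_hom.hom_one group_hom_axioms_def group_hom_def is_group)
  have i2: "invs (carrier G)" unfolding invs_def using subgroup_self by simp
  obtain k where k: "k > 0" "k * card {\<one>} \<le> card (carrier G)" "good {\<one>} (carrier G) k"
    using main_ind[OF i1 i2] by blast
  have "(\<tau>^^k) v = v" if "v \<in> carrier G" for v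
  proof -
    have "(\<tau>^^k) v \<otimes> inv v = \<one>" using k(3) that by (simp add: good_def eqv_def)
    moreover have "(\<tau>^^k) v = ((\<tau>^^k) v \<otimes> inv v) \<otimes> v" using that by (simp add: m_assoc)
    ultimately show ?thesis using that by simp
  qed
  then show ?thesis using k by auto
qed

end


lemma (in group) subgroup_card_dvd:
  assumes "subgroup T G" "subgroup S G" "T \<subseteq> S" shows "card T dvd card S"
proof -
  interpret S: group "G\<lparr>carrier := S\<rparr>" using subgroup.subgroup_is_group[OF assms(2) is_group] .
  have "subgroup T (G\<lparr>carrier := S\<rparr>)" using subgroup_incl assms by blast
  from S.lagrange[OF this] show ?thesis by (simp add: order_def) (metis dvd_triv_right)
qed

lemma (in group) bezout_mem:
  fixes a b :: nat
  assumes T: "subgroup T G" and x: "x \<in> carrier G" and cp: "coprime a b"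
    and xa: "x [^] a \<in> T" and xb: "x [^] b \<in> T"
  shows "x \<in> T"
proof (cases "a = 0")
  case True then have "b = 1" using cp by simp
  then show ?thesis using xb x by simp
next
  case False
  obtain u w where uw: "a * u = b * w + gcd a b" using bezout_nat[OF False] by blast
  then have uw': "a*u = Suc (b*w)" using cp by simp
  have t1: "x [^] (a*u) \<in> T" using subgroup_pow_closed[OF T xa, of u] by (simp add: nat_pow_pow x)
  have t2: "x [^] (b*w) \<in> T" using subgroup_pow_closed[OF T xb, of w] by (simp add: nat_pow_pow x)
  have e: "x [^] (a*u) = x [^] (b*w) \<otimes> x" using uw' x by simp
  have "x = inv (x [^] (b*w)) \<otimes> x [^] (a*u)" using e x by (simp add: m_assoc[symmetric])
  then show ?thesis using t1 t2 T subgroup.m_closed subgroup.m_inv_closed by metis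
qed

lemma (in group) no_prime_div:
  assumes fin: "finite (carrier G)" and l: "Factorial_Ring.prime l" and T: "subgroup T G" and S: "subgroup S G" and TS: "T \<subseteq> S"
    and hyp: "\<forall>x\<in>S. \<exists>m::nat. coprime m l \<and> x [^] m \<in> T"
  shows "\<not> l dvd (card S div card T)"
proof
  assume dv: "l dvd card S div card T"
  interpret GS: group "G\<lparr>carrier := S\<rparr>" using subgroup.subgroup_is_group[OF S is_group] .
  have finS: "finite S" using fin S subgroup.subset finite_subset by blast
  have cS: "card S \<noteq> 0" using finS subgroup.one_closed[OF S] by auto
  define v where "v = multiplicity l (card S)"
  obtain m where m: "card S = l^v * m" using multiplicity_dvd[of l "card S"] v_def by (auto elim: dvdE)
  have "order (G\<lparr>carrier:=S\<rparr>) = l^v * m" by (simp add: order_def m)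
  from sylow_thm[OF l GS.is_group this] finS obtain L where L: "subgroup L (G\<lparr>carrier:=S\<rparr>)" "card L = l^v" by auto
  have LG: "subgroup L G" using incl_subgroup[OF S L(1)] .
  have LS: "L \<subseteq> S" using subgroup.subset[OF L(1)] by simp
  have "L \<subseteq> T"
  proof
    fix x assume x: "x \<in> L"
    interpret GL: group "G\<lparr>carrier := L\<rparr>" using subgroup.subgroup_is_group[OF LG is_group] .
    have "x [^]\<^bsub>G\<lparr>carrier:=L\<rparr>\<^esub> order (G\<lparr>carrier:=L\<rparr>) = \<one>\<^bsub>G\<lparr>carrier:=L\<rparr>\<^esub>" using GL.pow_order_eq_1 x by simp
    then have x1: "x [^] (l^v) = \<one>" using L(2) by (simp add: order_def nat_pow_consistent[symmetric])
    obtain m' where m': "coprime m' l" "x [^] m' \<in> T" using hyp x LS by blast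
    have cpl: "coprime m' (l^v)" using m'(1) by simp
    show "x \<in> T" using bezout_mem[OF T _ cpl m'(2)] x1 subgroup.one_closed[OF T] x LG subgroup.subset by fastforce
  qed
  then have "l^v dvd card T" using subgroup_card_dvd[OF LG T] L(2) by simp
  moreover have "card S = (card S div card T) * card T" using subgroup_card_dvd[OF T S TS] by simp
  ultimately have "l^(Suc v) dvd card S" using dv by (metis mult_dvd_mono power_Suc)
  moreover have "l \<noteq> 1" using prime_gt_1_nat[OF l] by simp
  ultimately have "Suc v \<le> v" using multiplicity_geI[of "card S" l "Suc v"] cS v_def
    by simp
  then show False by simp
qed

lemma ppow:
  fixes N p :: nat
  assumes "N > 0" "\<And>l. Factorial_Ring.prime l \<Longrightarrow> l dvd N \<Longrightarrow> l = p" "Factorial_Ring.prime p"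
  shows "N = p ^ multiplicity p N"
proof -
  define k where "k = multiplicity p N"
  obtain y where y: "N = p ^ k * y" "\<not> p dvd y" using multiplicity_decompose'[of N p] k_def assms(1) prime_gt_1_nat[OF assms(3)] by auto
  have "y = 1"
  proof (rule ccontr)
    assume "y \<noteq> 1"
    then obtain l where l: "Factorial_Ring.prime l" "l dvd y" using prime_factor_nat by blast
    then have "l dvd N" using y(1) by (metis dvd_mult)
    then have "l = p" using assms(2) l(1) by blast
    then show False using l(2) y(2) by simp
  qed
  then have "N = p ^ k" using y(1) by (metis mult.right_neutral)
  then show ?thesis using k_def by metis
qed


lemma (in group) normal_sylow_torsion:
  assumes fin: "finite (carrier G)" and N: "Fp \<lhd> G" and p: "Factorial_Ring.prime p"
    and nd: "\<not> p dvd (order G div card Fp)"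
    and x: "x \<in> carrier G" and xp: "x [^] p = \<one>"
  shows "x \<in> Fp"
proof -
  interpret normal Fp G by (rule N)
  interpret Q: group "G Mod Fp" by (rule factorgroup_is_group)
  have sF: "subgroup Fp G" by (rule subgroup_axioms)
  have lag: "card (rcosets Fp) * card Fp = order G" by (rule lagrange[OF sF])
  have cF: "card Fp > 0" using fin sF subgroup.one_closed subgroup.subset finite_subset
    by (metis card_gt_0_iff empty_iff)
  define l where "l = card (rcosets Fp)"
  have l_eq: "l = order G div card Fp" using lag cF l_def by (metis nonzero_mult_div_cancel_right less_not_refl2)
  have ordQ: "order (G Mod Fp) = l" by (simp add: order_def FactGroup_def l_def)
  have xc: "Fp #> x \<in> carrier (G Mod Fp)" using x by (simp add: carrier_FactGroup)
  have "(Fp #> x) [^]\<^bsub>G Mod Fp\<^esub> l = \<one>\<^bsub>G Mod Fp\<^esub>" using Q.pow_order_eq_1[OF xc] ordQ by simp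
  then have "Fp #> (x [^] l) = Fp" using FactGroup_pow[OF x, of l] by simp
  then have xl: "x [^] l \<in> Fp" using rcos_self[OF _ sF, of "x [^] l"] x by simp
  have "coprime l p" using nd l_eq p by (simp add: prime_imp_coprime coprime_commute)
  moreover have "x [^] p \<in> Fp" using xp sF subgroup.one_closed by simp
  ultimately show ?thesis using bezout_mem[OF sF x _ xl] by blast
qed

definition cent :: "('a, 'b) monoid_scheme \<Rightarrow> 'a set \<Rightarrow> 'a set" where
  "cent G S = {g \<in> carrier G. \<forall>s\<in>S. g \<otimes>\<^bsub>G\<^esub> s = s \<otimes>\<^bsub>G\<^esub> g}"

lemma (in group) comm_inv:
  assumes "a \<in> carrier G" "s \<in> carrier G" "a \<otimes> s = s \<otimes> a"
  shows "inv a \<otimes> s = s \<otimes> inv a"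
proof -
  have "inv a \<otimes> s = inv a \<otimes> (s \<otimes> a) \<otimes> inv a" using assms by (simp add: m_assoc)
  also have "\<dots> = inv a \<otimes> (a \<otimes> s) \<otimes> inv a" using assms by simp
  also have "inv a \<otimes> (a \<otimes> s) = s" using assms(1,2) by (simp add: m_assoc[symmetric])
  finally show ?thesis by simp
qed

lemma (in group) cent_subgroup: assumes S: "S \<subseteq> carrier G" shows "subgroup (cent G S) G"
proof (rule subgroupI)
  show "cent G S \<subseteq> carrier G" by (auto simp: cent_def)
  have "\<one> \<in> cent G S" using S by (auto simp: cent_def)
  then show "cent G S \<noteq> {}" by blast
next
  fix a assume a: "a \<in> cent G S"
  show "inv a \<in> cent G S" unfolding cent_def
  proof (intro CollectI conjI ballI)
    show "inv a \<in> carrier G" using a by (auto simp: cent_def)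
    fix s assume s: "s \<in> S"
    have ac: "a \<in> carrier G" using a by (auto simp: cent_def)
    have e: "a \<otimes> s = s \<otimes> a" using a s by (auto simp: cent_def)
    show "inv a \<otimes> s = s \<otimes> inv a" using comm_inv[OF ac _ e] s S by blast
  qed
next
  fix a b assume a: "a \<in> cent G S" and b: "b \<in> cent G S"
  show "a \<otimes> b \<in> cent G S" unfolding cent_def
  proof (intro CollectI conjI ballI)
    have ac: "a \<in> carrier G" "b \<in> carrier G" using a b by (auto simp: cent_def)
    then show "a \<otimes> b \<in> carrier G" by simp
    fix s assume s: "s \<in> S"
    have sc: "s \<in> carrier G" using s S by blast
    have "a \<otimes> b \<otimes> s = a \<otimes> (b \<otimes> s)" using ac sc by (simp add: m_assoc)
    also have "\<dots> = a \<otimes> (s \<otimes> b)" using b s by (simp add: cent_def)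
    also have "\<dots> = (a \<otimes> s) \<otimes> b" using ac sc by (simp add: m_assoc)
    also have "\<dots> = (s \<otimes> a) \<otimes> b" using a s by (simp add: cent_def)
    also have "\<dots> = s \<otimes> (a \<otimes> b)" using ac sc by (simp add: m_assoc)
    finally show "a \<otimes> b \<otimes> s = s \<otimes> (a \<otimes> b)" .
  qed
qed

lemma (in group) cent_generate:
  assumes S: "S \<subseteq> carrier G" shows "cent G S \<subseteq> cent G (generate G S)"
proof
  fix g assume g: "g \<in> cent G S"
  have gc: "g \<in> carrier G" using g by (simp add: cent_def)
  have "S \<subseteq> cent G {g}" using g S by (auto simp: cent_def)
  then have "generate G S \<subseteq> cent G {g}"
    using generate_subgroup_incl[OF _ cent_subgroup[of "{g}"]] gc by blast
  then show "g \<in> cent G (generate G S)" using gc by (auto simp: cent_def)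
qed


lemma (in group) cancel_a: "x \<in> carrier G \<Longrightarrow> y \<in> carrier G \<Longrightarrow> x \<otimes> (inv x \<otimes> y) = y"
  by (simp add: m_assoc[symmetric])
lemma (in group) cancel_b: "x \<in> carrier G \<Longrightarrow> y \<in> carrier G \<Longrightarrow> inv x \<otimes> (x \<otimes> y) = y"
  by (simp add: m_assoc[symmetric])

locale ext = H: group H + Hb: comm_group Hbar
  for H :: "('a, 'm) monoid_scheme" (structure) and Hbar :: "('c, 'n) monoid_scheme" +
  fixes \<pi> :: "'a \<Rightarrow> 'c"
  assumes pi_hom: "\<pi> \<in> hom H Hbar" and finH: "finite (carrier H)"
begin

abbreviation K where "K \<equiv> kernel H Hbar \<pi>"

lemma gh: "group_hom H Hbar \<pi>"
  by (simp add: group_hom_def group_hom_axioms_def pi_hom H.is_group Hb.is_group)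

lemma K_sub: "subgroup K H" using group_hom.subgroup_kernel[OF gh] .

lemma K_carrier: "K \<subseteq> carrier H" using K_sub subgroup.subset by blast

lemma finK: "finite K" using K_carrier finH finite_subset by blast

lemma pi_c: "x \<in> carrier H \<Longrightarrow> \<pi> x \<in> carrier Hbar" using pi_hom by (auto simp: hom_def)

lemma same_img: "a \<in> carrier H \<Longrightarrow> b \<in> carrier H \<Longrightarrow> \<pi> a = \<pi> b \<Longrightarrow> inv a \<otimes> b \<in> K"
  using group_hom.hom_inv[OF gh] group_hom.hom_mult[OF gh] pi_c
  by (simp add: kernel_def)

lemma conj_img: "a \<in> carrier H \<Longrightarrow> z \<in> carrier H \<Longrightarrow> \<pi> (a \<otimes> z \<otimes> inv a) = \<pi> z"
proof -
  assume a: "a \<in> carrier H" and z: "z \<in> carrier H"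
  have "\<pi> (a \<otimes> z \<otimes> inv a) = \<pi> a \<otimes>\<^bsub>Hbar\<^esub> \<pi> z \<otimes>\<^bsub>Hbar\<^esub> inv\<^bsub>Hbar\<^esub> \<pi> a"
    using group_hom.hom_inv[OF gh] group_hom.hom_mult[OF gh] a z by simp
  also have "\<dots> = \<pi> z \<otimes>\<^bsub>Hbar\<^esub> \<pi> a \<otimes>\<^bsub>Hbar\<^esub> inv\<^bsub>Hbar\<^esub> \<pi> a"
    using pi_c a z Hb.m_comm by metis
  also have "\<dots> = \<pi> z \<otimes>\<^bsub>Hbar\<^esub> (\<pi> a \<otimes>\<^bsub>Hbar\<^esub> inv\<^bsub>Hbar\<^esub> \<pi> a)"
    using pi_c a z Hb.m_assoc by simp
  also have "\<dots> = \<pi> z" using pi_c a z by simp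
  finally show ?thesis .
qed

lemma normal_over_K:
  assumes Q: "subgroup Q H" "K \<subseteq> Q" and a: "a \<in> carrier H" and z: "z \<in> Q"
  shows "a \<otimes> z \<otimes> inv a \<in> Q"
proof -
  have zc: "z \<in> carrier H" using z Q subgroup.subset by blast
  define w where "w = a \<otimes> z \<otimes> inv a"
  have wc: "w \<in> carrier H" using a zc w_def by simp
  have "inv z \<otimes> w \<in> K" using same_img[OF zc wc] conj_img[OF a zc] w_def by simp
  then have "inv z \<otimes> w \<in> Q" using Q by blast
  moreover have "w = z \<otimes> (inv z \<otimes> w)" using zc wc by (simp add: H.m_assoc[symmetric])
  ultimately show ?thesis using z Q subgroup.m_closed w_def by metis
qed

lemma prod_pow_mod:
  assumes "g \<in> carrier H" "h \<in> carrier H"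
  shows "inv (g [^] (n::nat) \<otimes> h [^] n) \<otimes> (g \<otimes> h) [^] n \<in> K"
proof -
  have "\<pi> ((g \<otimes> h) [^] n) = (\<pi> g \<otimes>\<^bsub>Hbar\<^esub> \<pi> h) [^]\<^bsub>Hbar\<^esub> n"
    using group_hom.hom_nat_pow[OF gh] group_hom.hom_mult[OF gh] assms by simp
  also have "\<dots> = \<pi> g [^]\<^bsub>Hbar\<^esub> n \<otimes>\<^bsub>Hbar\<^esub> \<pi> h [^]\<^bsub>Hbar\<^esub> n"
    using Hb.pow_mult_distrib Hb.m_comm pi_c assms by simp
  also have "\<dots> = \<pi> (g [^] n \<otimes> h [^] n)"
    using group_hom.hom_nat_pow[OF gh] group_hom.hom_mult[OF gh] assms by simp
  finally show ?thesis using same_img assms by simp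
qed


lemma p_index:
  fixes p :: nat
  assumes R: "subgroup R H" "K \<subseteq> R" and Xs: "Xs \<subseteq> carrier H"
    and gen: "generate H (K \<union> Xs) = carrier H"
    and hx: "\<forall>x\<in>Xs. \<exists>j. x [^] (p^j) \<in> R"
  shows "\<forall>g\<in>carrier H. \<exists>j. g [^] (p^j) \<in> R"
proof -
  define G' where "G' = {g \<in> carrier H. \<exists>j. g [^] (p^j) \<in> R}"
  have sG: "subgroup G' H"
  proof (rule H.subgroupI)
    show "G' \<subseteq> carrier H" using G'_def by auto
    have "\<one> \<in> G'" using G'_def R subgroup.one_closed by fastforce
    then show "G' \<noteq> {}" by blast
  next
    fix a assume a: "a \<in> G'"
    then obtain j where ac: "a \<in> carrier H" and j: "a [^] (p^j) \<in> R" using G'_def by auto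
    have "inv a [^] (p^j) = inv (a [^] (p^j))" using H.nat_pow_inv[OF ac] .
    then have "inv a [^] (p^j) \<in> R" using j R subgroup.m_inv_closed by metis
    then show "inv a \<in> G'" using ac G'_def by auto
  next
    fix a b assume a: "a \<in> G'" and b: "b \<in> G'"
    obtain i where ac: "a \<in> carrier H" and i: "a [^] (p^i) \<in> R" using a G'_def by auto
    obtain j where bc: "b \<in> carrier H" and j: "b [^] (p^j) \<in> R" using b G'_def by auto
    define n where "n = p^(i+j)"
    have an: "a [^] n \<in> R"
    proof -
      have "a [^] n = (a [^] (p^i)) [^] (p^j)" using ac n_def by (simp add: H.nat_pow_pow power_add)
      then show ?thesis using subgroup_pow_closed[OF R(1) i] by simp
    qed
    have bn: "b [^] n \<in> R"
    proof -
      have "b [^] n = (b [^] (p^j)) [^] (p^i)" using bc n_def by (simp add: H.nat_pow_pow power_add mult.commute)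
      then show ?thesis using subgroup_pow_closed[OF R(1) j] by simp
    qed
    have k: "inv (a [^] n \<otimes> b [^] n) \<otimes> (a \<otimes> b) [^] n \<in> R" using prod_pow_mod[OF ac bc] R by blast
    have "(a \<otimes> b) [^] n = (a [^] n \<otimes> b [^] n) \<otimes> (inv (a [^] n \<otimes> b [^] n) \<otimes> (a \<otimes> b) [^] n)"
      using ac bc by (simp add: H.m_assoc[symmetric])
    then have "(a \<otimes> b) [^] n \<in> R" using an bn k R subgroup.m_closed by metis
    then show "a \<otimes> b \<in> G'" using ac bc G'_def n_def by auto
  qed
  have "K \<union> Xs \<subseteq> G'"
  proof
    fix x assume "x \<in> K \<union> Xs"
    then show "x \<in> G'"
    proof
      assume xK: "x \<in> K"
      then have "x \<in> carrier H" using K_carrier by blast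
      then show ?thesis using R xK G'_def by (auto intro!: exI[of _ 0])
    next
      assume "x \<in> Xs" then show ?thesis using hx Xs G'_def by auto
    qed
  qed
  then have "generate H (K \<union> Xs) \<subseteq> G'" using H.generate_subgroup_incl[OF _ sG] by blast
  then show ?thesis using gen G'_def by auto
qed

lemma R_step:
  assumes Q: "subgroup Q H" "K \<subseteq> Q" and y: "y \<in> carrier H" and q: "q > 0" and yq: "y [^] (q::nat) \<in> Q"
  shows "\<exists>Q'. subgroup Q' H \<and> Q \<subseteq> Q' \<and> y \<in> Q' \<and> card Q' \<le> q * card Q"
proof -
  have Qc: "Q \<subseteq> carrier H" using Q subgroup.subset by blast
  define Q' where "Q' = {g \<in> carrier H. \<exists>e::nat. inv (y [^] e) \<otimes> g \<in> Q}"
  have sQ': "subgroup Q' H"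
  proof (rule H.subgroupI)
    show "Q' \<subseteq> carrier H" using Q'_def by auto
    have "\<one> \<in> Q'" using Q'_def Q subgroup.one_closed by (fastforce intro!: exI[of _ 0])
    then show "Q' \<noteq> {}" by blast
  next
    fix g assume g: "g \<in> Q'"
    then obtain e :: nat where gc: "g \<in> carrier H" and e: "inv (y [^] e) \<otimes> g \<in> Q" using Q'_def by auto
    define z where "z = inv (y [^] e) \<otimes> g"
    have zc: "z \<in> carrier H" using z_def gc y by simp
    define e' where "e' = e * (q - 1)"
    define c where "c = inv (y [^] e') \<otimes> inv z \<otimes> inv (inv (y [^] e'))"
    have izQ: "inv z \<in> Q" using subgroup.m_inv_closed[OF Q(1)] e z_def by simp
    have c: "c \<in> Q" unfolding c_def
      by (rule normal_over_K[OF Q _ izQ]) (simp add: y)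
    have yqe: "(y [^] q) [^] e \<in> Q" using subgroup_pow_closed[OF Q(1) yq] .
    have ee: "e + e' = q * e" using q e'_def by (cases q) (auto simp: algebra_simps)
    have g_eq: "g = y [^] e \<otimes> z" using z_def gc y by (simp add: H.m_assoc[symmetric])
    have e1: "inv (y [^] e') \<otimes> inv g = inv (y [^] e') \<otimes> inv z \<otimes> inv (y [^] e)"
      using g_eq zc y by (simp add: H.inv_mult_group H.m_assoc)
    have e2: "inv (y [^] e') \<otimes> inv z \<otimes> inv (y [^] e) = c \<otimes> (inv (y [^] e') \<otimes> inv (y [^] e))"
      using zc y c_def by (simp add: H.m_assoc H.cancel_a)
    have e3a: "y [^] e \<otimes> y [^] e' = (y [^] q) [^] e"
      using y ee by (simp add: H.nat_pow_mult H.nat_pow_pow)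
    have e3: "inv (y [^] e') \<otimes> inv (y [^] e) = inv ((y [^] q) [^] e)"
      using y H.inv_mult_group[of "y [^] e" "y [^] e'"] e3a by simp
    have "inv (y [^] e') \<otimes> inv g = c \<otimes> inv ((y [^] q) [^] e)" using e1 e2 e3 by simp
    then have "inv (y [^] e') \<otimes> inv g \<in> Q" using c yqe Q subgroup.m_closed subgroup.m_inv_closed by metis
    then show "inv g \<in> Q'" using Q'_def gc by auto
  next
    fix g h assume g: "g \<in> Q'" and h: "h \<in> Q'"
    obtain e1 :: nat where gc: "g \<in> carrier H" and e1: "inv (y [^] e1) \<otimes> g \<in> Q" using g Q'_def by auto
    obtain e2 :: nat where hc: "h \<in> carrier H" and e2: "inv (y [^] e2) \<otimes> h \<in> Q" using h Q'_def by auto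
    define z1 where "z1 = inv (y [^] e1) \<otimes> g"
    define z2 where "z2 = inv (y [^] e2) \<otimes> h"
    have zc: "z1 \<in> carrier H" "z2 \<in> carrier H" using z1_def z2_def gc hc y by auto
    define c where "c = inv (y [^] e2) \<otimes> z1 \<otimes> inv (inv (y [^] e2))"
    have c: "c \<in> Q" unfolding c_def using normal_over_K[OF Q, of "inv (y [^] e2)" z1] e1 z1_def y by auto
    have "inv (y [^] (e1 + e2)) \<otimes> (g \<otimes> h) = c \<otimes> z2"
    proof -
      have g_eq: "g = y [^] e1 \<otimes> z1" using z1_def gc y by (simp add: H.m_assoc[symmetric])
      have h_eq: "h = y [^] e2 \<otimes> z2" using z2_def hc y by (simp add: H.m_assoc[symmetric])
      have "inv (y [^] (e1 + e2)) = inv (y [^] e2) \<otimes> inv (y [^] e1)"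
        using y by (simp add: H.nat_pow_mult[symmetric] H.inv_mult_group)
      then have "inv (y [^] (e1 + e2)) \<otimes> (g \<otimes> h) = inv (y [^] e2) \<otimes> (inv (y [^] e1) \<otimes> (y [^] e1 \<otimes> z1)) \<otimes> h"
        using g_eq y zc hc by (simp add: H.m_assoc)
      also have "\<dots> = inv (y [^] e2) \<otimes> z1 \<otimes> h" using y zc by (simp add: H.m_assoc[symmetric])
      also have "\<dots> = c \<otimes> z2" using h_eq y zc c_def by (simp add: H.m_assoc)
      finally show ?thesis .
    qed
    then have "inv (y [^] (e1 + e2)) \<otimes> (g \<otimes> h) \<in> Q" using c e2 z2_def Q subgroup.m_closed by metis
    then show "g \<otimes> h \<in> Q'" using Q'_def gc hc by auto
  qed
  have QQ': "Q \<subseteq> Q'" using Q'_def Qc by (auto intro!: exI[of _ 0])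
  have yQ': "y \<in> Q'" using Q'_def y Q subgroup.one_closed by (auto intro!: exI[of _ 1])
  have img: "Q' \<subseteq> (\<lambda>(e, z). y [^] e \<otimes> z) ` ({..<q} \<times> Q)"
  proof
    fix g assume g: "g \<in> Q'"
    then obtain e :: nat where gc: "g \<in> carrier H" and e: "inv (y [^] e) \<otimes> g \<in> Q" using Q'_def by auto
    define a where "a = e mod q"
    define b where "b = e div q"
    have ab: "e = a + q * b" using a_def b_def by simp
    define z where "z = (y [^] q) [^] b \<otimes> (inv (y [^] e) \<otimes> g)"
    have zQ: "z \<in> Q" using z_def subgroup_pow_closed[OF Q(1) yq] e Q subgroup.m_closed by metis
    have "y [^] a \<otimes> z = g"
    proof -
      have ue: "y [^] e = y [^] a \<otimes> (y [^] q) [^] b" using ab y by (simp add: H.nat_pow_mult H.nat_pow_pow)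
      have "y [^] a \<otimes> z = (y [^] a \<otimes> (y [^] q) [^] b) \<otimes> (inv (y [^] e) \<otimes> g)"
        using z_def y gc by (simp add: H.m_assoc)
      also have "\<dots> = y [^] e \<otimes> (inv (y [^] e) \<otimes> g)" using ue by simp
      also have "\<dots> = g" using y gc by (simp add: H.m_assoc[symmetric])
      finally show ?thesis .
    qed
    moreover have "a < q" using a_def q by simp
    ultimately show "g \<in> (\<lambda>(e, z). y [^] e \<otimes> z) ` ({..<q} \<times> Q)" using zQ by force
  qed
  have "finite Q" using Qc finH finite_subset by blast
  then have "card Q' \<le> card ({..<q} \<times> Q)"
    using card_mono[OF _ img] card_image_le by (meson finite_SigmaI finite_imageI finite_lessThan le_trans)
  also have "\<dots> = q * card Q" by (simp add: card_cartesian_product)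
  finally show ?thesis using sQ' QQ' yQ' by blast
qed

end


context ext begin

lemma class_bound:
  assumes Q: "subgroup Q H" and x: "x \<in> carrier H"
  shows "card Q \<le> card K * card (Q \<inter> cent H {x})"
proof -
  have Qc: "Q \<subseteq> carrier H" using Q subgroup.subset by blast
  have finQ: "finite Q" using Qc finH finite_subset by blast
  define \<phi> where "\<phi> k = inv x \<otimes> (k \<otimes> x \<otimes> inv k)" for k
  have phiK: "\<phi> k \<in> K" if "k \<in> Q" for k
  proof -
    have kc: "k \<in> carrier H" using that Qc by blast
    show ?thesis unfolding \<phi>_def using same_img[OF x _ conj_img[OF kc x, symmetric]] kc x by simp
  qed
  define C where "C = Q \<inter> cent H {x}"
  have fib: "card {k \<in> Q. \<phi> k = u} \<le> card C" if u: "u \<in> \<phi> ` Q" for u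
  proof -
    obtain k0 where k0: "k0 \<in> Q" "\<phi> k0 = u" using u by blast
    have k0c: "k0 \<in> carrier H" using k0 Qc by blast
    have inj: "inj_on (\<lambda>k. inv k0 \<otimes> k) {k \<in> Q. \<phi> k = u}"
    proof (rule inj_onI)
      fix a b assume a: "a \<in> {k \<in> Q. \<phi> k = u}" and b: "b \<in> {k \<in> Q. \<phi> k = u}" and e: "inv k0 \<otimes> a = inv k0 \<otimes> b"
      have "a \<in> carrier H" "b \<in> carrier H" using a b Qc by auto
      then show "a = b" using e H.l_cancel[of "inv k0" a b] k0c by simp
    qed
    have "(\<lambda>k. inv k0 \<otimes> k) ` {k \<in> Q. \<phi> k = u} \<subseteq> C"
    proof
      fix w assume "w \<in> (\<lambda>k. inv k0 \<otimes> k) ` {k \<in> Q. \<phi> k = u}"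
      then obtain k where k: "k \<in> Q" "\<phi> k = u" "w = inv k0 \<otimes> k" by blast
      have kc: "k \<in> carrier H" using k Qc by blast
      have wQ: "w \<in> Q" using k k0 Q subgroup.m_closed subgroup.m_inv_closed by metis
      have "inv x \<otimes> (k \<otimes> x \<otimes> inv k) = inv x \<otimes> (k0 \<otimes> x \<otimes> inv k0)" using k(2) k0(2) \<phi>_def by simp
      then have e: "k \<otimes> x \<otimes> inv k = k0 \<otimes> x \<otimes> inv k0" using x kc k0c by simp
      have "w \<otimes> x = inv k0 \<otimes> (k \<otimes> x \<otimes> inv k) \<otimes> k" using k(3) kc k0c x by (simp add: H.m_assoc)
      also have "\<dots> = inv k0 \<otimes> (k0 \<otimes> x \<otimes> inv k0) \<otimes> k" using e by simp
      also have "\<dots> = x \<otimes> w" using k(3) kc k0c x by (simp add: H.m_assoc H.cancel_b)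
      finally have "w \<otimes> x = x \<otimes> w" .
      then show "w \<in> C" using wQ Qc C_def by (auto simp: cent_def)
    qed
    moreover have "finite C" using C_def finQ by simp
    ultimately show ?thesis using card_inj_on_le[OF inj] by blast
  qed
  have "Q = (\<Union>u\<in>\<phi> ` Q. {k \<in> Q. \<phi> k = u})" by blast
  then have "card Q \<le> (\<Sum>u\<in>\<phi> ` Q. card {k \<in> Q. \<phi> k = u})"
    using card_UN_le[of "\<phi> ` Q" "\<lambda>u. {k \<in> Q. \<phi> k = u}"] finQ by simp
  also have "\<dots> \<le> (\<Sum>u\<in>\<phi> ` Q. card C)" using fib by (intro sum_mono) auto
  also have "\<dots> = card (\<phi> ` Q) * card C" by simp
  also have "\<dots> \<le> card K * card C"
    using card_mono[OF finK] phiK by (intro mult_le_mono1) blast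
  finally show ?thesis using C_def by simp
qed

lemma C_iter:
  assumes T: "finite T" "T \<subseteq> carrier H" and Q: "subgroup Q H"
  shows "card Q \<le> card K ^ card T * card (Q \<inter> cent H T)"
  using T
proof (induction T rule: finite_induct)
  case empty
  have "Q \<inter> cent H {} = Q" using Q subgroup.subset by (fastforce simp: cent_def)
  then show ?case by simp
next
  case (insert t T)
  have tc: "t \<in> carrier H" using insert by simp
  have sQ': "subgroup (Q \<inter> cent H T) H" using H.subgroups_Inter_pair[OF Q H.cent_subgroup] insert by simp
  have a1: "card Q \<le> card K ^ card T * card (Q \<inter> cent H T)" using insert by simp
  have a2: "card (Q \<inter> cent H T) \<le> card K * card (Q \<inter> cent H T \<inter> cent H {t})"
    using class_bound[OF sQ' tc] .
  have a3: "Q \<inter> cent H T \<inter> cent H {t} = Q \<inter> cent H (insert t T)" by (auto simp: cent_def)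
  have "card Q \<le> card K ^ card T * (card K * card (Q \<inter> cent H (insert t T)))"
    using a1 a2 a3 by (metis le_trans mult_le_mono2)
  then show ?case using insert(1,2) by (simp add: ac_simps)
qed

lemma R_iter:
  fixes p B0 :: nat
  assumes X: "finite Xs" "Xs \<subseteq> carrier H" and M: "subgroup M H" "K \<subseteq> M"
    and hx: "\<forall>x\<in>Xs. \<exists>a k. 0 < k \<and> k \<le> B0 \<and> (x [^] (p^a)) [^] k \<in> M"
  shows "\<exists>R. subgroup R H \<and> M \<subseteq> R \<and> card R \<le> B0 ^ card Xs * card M \<and> (\<forall>x\<in>Xs. \<exists>j. x [^] (p^j) \<in> R)"
  using X hx
proof (induction Xs rule: finite_induct)
  case empty
  then show ?case using M by auto
next
  case (insert x Xs)
  then obtain R where R: "subgroup R H" "M \<subseteq> R" "card R \<le> B0 ^ card Xs * card M" "\<forall>x\<in>Xs. \<exists>j. x [^] (p^j) \<in> R"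
    by auto
  obtain a k where ak: "0 < k" "k \<le> B0" "(x [^] (p^a)) [^] k \<in> M" using insert.prems by auto
  have xc: "x \<in> carrier H" using insert by simp
  have "\<exists>Q'. subgroup Q' H \<and> R \<subseteq> Q' \<and> x [^] (p^a) \<in> Q' \<and> card Q' \<le> k * card R"
    using R_step[OF R(1) _ _ ak(1)] R(2) M(2) ak(3) xc by blast
  then obtain Q' where Q': "subgroup Q' H" "R \<subseteq> Q'" "x [^] (p^a) \<in> Q'" "card Q' \<le> k * card R" by blast
  have "card Q' \<le> B0 * (B0 ^ card Xs * card M)"
    using Q'(4) R(3) ak(2) by (meson le_trans mult_le_mono)
  then have "card Q' \<le> B0 ^ card (insert x Xs) * card M" using insert by (simp add: mult.assoc)
  moreover have "\<forall>y\<in>insert x Xs. \<exists>j. y [^] (p^j) \<in> Q'" using R(4) Q'(2,3) by blast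
  ultimately show ?case using Q' R(2) by blast
qed

end


lemma pow_prod_mod:
  assumes "x \<in> carrier (product_group I (\<lambda>_. integer_mod_group p))"
  shows "x [^]\<^bsub>product_group I (\<lambda>_. integer_mod_group p)\<^esub> (n::nat) = (\<lambda>i\<in>I. (int n * x i) mod int p)"
proof (induction n)
  case 0
  then show ?case by simp
next
  case (Suc n)
  have "x [^]\<^bsub>product_group I (\<lambda>_. integer_mod_group p)\<^esub> Suc n =
        (\<lambda>i\<in>I. ((int n * x i) mod int p + x i) mod int p)"
    using Suc assms by (simp add: restrict_def fun_eq_iff)
  also have "\<dots> = (\<lambda>i\<in>I. (int (Suc n) * x i) mod int p)"
    by (intro restrict_ext) (simp add: mod_add_left_eq mod_add_right_eq distrib_right add.commute)
  finally show ?case .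
qed

lemma iso_prod_facts:
  fixes F :: "('a, 'b) monoid_scheme"
  assumes F: "group F" and S: "subgroup Fp F"
    and iso: "F\<lparr>carrier := Fp\<rparr> \<cong> product_group {..<m} (\<lambda>_. integer_mod_group p)"
  shows "\<forall>x\<in>Fp. \<forall>y\<in>Fp. x \<otimes>\<^bsub>F\<^esub> y = y \<otimes>\<^bsub>F\<^esub> x" and "\<forall>x\<in>Fp. x [^]\<^bsub>F\<^esub> p = \<one>\<^bsub>F\<^esub>"
proof -
  interpret F: group F by fact
  define PG where "PG = product_group {..<m} (\<lambda>_. integer_mod_group p)"
  obtain \<phi> where \<phi>: "\<phi> \<in> iso (F\<lparr>carrier := Fp\<rparr>) PG" using iso PG_def by (auto simp: is_iso_def)
  have gS: "group (F\<lparr>carrier := Fp\<rparr>)" using subgroup.subgroup_is_group[OF S F.is_group] .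
  have gP: "group PG" using PG_def by simp
  have hom: "\<phi> \<in> hom (F\<lparr>carrier := Fp\<rparr>) PG" and bij: "bij_betw \<phi> Fp (carrier PG)"
    using \<phi> by (auto simp: iso_def)
  have inj: "inj_on \<phi> Fp" using bij bij_betw_def by blast
  have phic: "x \<in> Fp \<Longrightarrow> \<phi> x \<in> carrier PG" for x using bij bij_betwE by blast
  have phim: "x \<in> Fp \<Longrightarrow> y \<in> Fp \<Longrightarrow> \<phi> (x \<otimes>\<^bsub>F\<^esub> y) = \<phi> x \<otimes>\<^bsub>PG\<^esub> \<phi> y" for x y
    using hom by (auto simp: hom_def)
  have Sc: "Fp \<subseteq> carrier F" using S subgroup.subset by blast
  show "\<forall>x\<in>Fp. \<forall>y\<in>Fp. x \<otimes>\<^bsub>F\<^esub> y = y \<otimes>\<^bsub>F\<^esub> x"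
  proof (intro ballI)
    fix x y assume x: "x \<in> Fp" and y: "y \<in> Fp"
    have "\<phi> x \<otimes>\<^bsub>PG\<^esub> \<phi> y = \<phi> y \<otimes>\<^bsub>PG\<^esub> \<phi> x" unfolding PG_def
      by (simp add: add.commute)
    then have "\<phi> (x \<otimes>\<^bsub>F\<^esub> y) = \<phi> (y \<otimes>\<^bsub>F\<^esub> x)" using phim x y by simp
    moreover have "x \<otimes>\<^bsub>F\<^esub> y \<in> Fp" "y \<otimes>\<^bsub>F\<^esub> x \<in> Fp" using subgroup.m_closed[OF S] x y by auto
    ultimately show "x \<otimes>\<^bsub>F\<^esub> y = y \<otimes>\<^bsub>F\<^esub> x" using inj inj_onD by metis
  qed
  show "\<forall>x\<in>Fp. x [^]\<^bsub>F\<^esub> p = \<one>\<^bsub>F\<^esub>"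
  proof
    fix x assume x: "x \<in> Fp"
    have xpS: "x [^]\<^bsub>F\<^esub> p \<in> Fp" using subgroup_pow_closed[OF S x] .
    have "\<phi> (x [^]\<^bsub>F\<^esub> p) = \<phi> (x [^]\<^bsub>F\<lparr>carrier := Fp\<rparr>\<^esub> p)" by (rule arg_cong[where f=\<phi>], rule F.nat_pow_consistent)
    also have "\<dots> = \<phi> x [^]\<^bsub>PG\<^esub> p" using hom_nat_pow[OF hom _ gS gP] x by simp
    also have "\<dots> = (\<lambda>i\<in>{..<m}. (int p * \<phi> x i) mod int p)" unfolding PG_def by (rule pow_prod_mod) (use phic[OF x] PG_def in simp)
    also have "\<dots> = (\<lambda>i\<in>{..<m}. (0::int))" by (rule restrict_ext) simp
    also have "\<dots> = \<one>\<^bsub>PG\<^esub>" unfolding PG_def by simp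
    also have "\<dots> = \<phi> \<one>\<^bsub>F\<^esub>" using hom_one[OF hom gS gP] by simp
    finally have "\<phi> (x [^]\<^bsub>F\<^esub> p) = \<phi> \<one>\<^bsub>F\<^esub>" .
    then show "x [^]\<^bsub>F\<^esub> p = \<one>\<^bsub>F\<^esub>" using inj xpS subgroup.one_closed[OF S] inj_onD by metis
  qed
qed

lemma (in group) conj_pow:
  assumes "g \<in> carrier G" "v \<in> carrier G"
  shows "(g \<otimes> v \<otimes> inv g) [^] (n::nat) = g \<otimes> v [^] n \<otimes> inv g"
proof (induction n)
  case 0 then show ?case using assms by simp
next
  case (Suc n)
  have "(g \<otimes> v \<otimes> inv g) [^] Suc n = g \<otimes> v [^] n \<otimes> inv g \<otimes> (g \<otimes> v \<otimes> inv g)" using Suc by simp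
  also have "\<dots> = g \<otimes> (v [^] n \<otimes> (inv g \<otimes> (g \<otimes> (v \<otimes> inv g))))" using assms by (simp add: m_assoc)
  also have "\<dots> = g \<otimes> (v [^] n \<otimes> (v \<otimes> inv g))" using assms by (simp add: cancel_b)
  also have "\<dots> = g \<otimes> v [^] Suc n \<otimes> inv g" using assms by (simp add: m_assoc)
  finally show ?case .
qed

lemma (in group) conj_funpow:
  assumes "y \<in> carrier G" "v \<in> carrier G"
  shows "((\<lambda>v. y \<otimes> v \<otimes> inv y) ^^ k) v = y [^] (k::nat) \<otimes> v \<otimes> inv (y [^] k)"
proof (induction k)
  case 0 then show ?case using assms by simp
next
  case (Suc k)
  have "((\<lambda>v. y \<otimes> v \<otimes> inv y) ^^ Suc k) v = y \<otimes> (y [^] k \<otimes> v \<otimes> inv (y [^] k)) \<otimes> inv y"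
    using Suc by simp
  also have "\<dots> = (y \<otimes> y [^] k) \<otimes> v \<otimes> (inv (y [^] k) \<otimes> inv y)" using assms by (simp add: m_assoc)
  also have "\<dots> = y [^] Suc k \<otimes> v \<otimes> inv (y [^] Suc k)"
    unfolding nat_pow_Suc2[OF assms(1)] using assms by (simp add: inv_mult_group)
  finally show ?case .
qed


lemma (in group) tors_sub:
  assumes Pr1: "Pr (1::nat)" and Prm: "\<And>a b. Pr a \<Longrightarrow> Pr b \<Longrightarrow> Pr (a * b)"
  shows "subgroup {z \<in> cent G (carrier G). \<exists>n. Pr n \<and> z [^] n = \<one>} G"
proof (rule subgroupI)
  have sZ: "subgroup (cent G (carrier G)) G" using cent_subgroup by simp
  show "{z \<in> cent G (carrier G). \<exists>n. Pr n \<and> z [^] n = \<one>} \<subseteq> carrier G" by (auto simp: cent_def)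
  have "\<one> \<in> cent G (carrier G)" using subgroup.one_closed[OF sZ] .
  then have "\<one> \<in> {z \<in> cent G (carrier G). \<exists>n. Pr n \<and> z [^] n = \<one>}" using Pr1 by auto
  then show "{z \<in> cent G (carrier G). \<exists>n. Pr n \<and> z [^] n = \<one>} \<noteq> {}" by blast
next
  have sZ: "subgroup (cent G (carrier G)) G" using cent_subgroup by simp
  fix a assume a: "a \<in> {z \<in> cent G (carrier G). \<exists>n. Pr n \<and> z [^] n = \<one>}"
  then obtain n where n: "Pr n" "a [^] n = \<one>" and aZ: "a \<in> cent G (carrier G)" by auto
  have ac: "a \<in> carrier G" using aZ by (simp add: cent_def)
  have "inv a \<in> cent G (carrier G)" using subgroup.m_inv_closed[OF sZ aZ] .
  moreover have "inv a [^] n = \<one>" using nat_pow_inv[OF ac] n by simp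
  ultimately show "inv a \<in> {z \<in> cent G (carrier G). \<exists>n. Pr n \<and> z [^] n = \<one>}" using n by auto
next
  have sZ: "subgroup (cent G (carrier G)) G" using cent_subgroup by simp
  fix a b assume a: "a \<in> {z \<in> cent G (carrier G). \<exists>n. Pr n \<and> z [^] n = \<one>}"
    and b: "b \<in> {z \<in> cent G (carrier G). \<exists>n. Pr n \<and> z [^] n = \<one>}"
  then obtain n m where n: "Pr n" "a [^] n = \<one>" and m: "Pr m" "b [^] m = \<one>"
    and aZ: "a \<in> cent G (carrier G)" and bZ: "b \<in> cent G (carrier G)" by auto
  have ac: "a \<in> carrier G" and bc: "b \<in> carrier G" using aZ bZ by (auto simp: cent_def)
  have comm: "a \<otimes> b = b \<otimes> a" using aZ bc by (auto simp: cent_def)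
  have "(a \<otimes> b) [^] (n * m) = a [^] (n * m) \<otimes> b [^] (n * m)" using pow_mult_distrib[OF comm ac bc] .
  also have "a [^] (n * m) = \<one>" using n ac by (simp add: nat_pow_pow[symmetric])
  also have "b [^] (n * m) = \<one>" using m bc by (simp add: nat_pow_pow[symmetric] mult.commute)
  finally have "(a \<otimes> b) [^] (n * m) = \<one>" by simp
  moreover have "a \<otimes> b \<in> cent G (carrier G)" using subgroup.m_closed[OF sZ aZ bZ] .
  ultimately show "a \<otimes> b \<in> {z \<in> cent G (carrier G). \<exists>n. Pr n \<and> z [^] n = \<one>}" using Prm[OF n(1) m(1)] by auto
qed

lemma (in group) Zp_sub: "subgroup {z \<in> cent G (carrier G). \<exists>n. (\<exists>j. n = (p::nat)^j) \<and> z [^] n = \<one>} G"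
  by (rule tors_sub) (auto intro: exI[of _ 0] simp: power_add[symmetric])

lemma (in group) A_sub: "subgroup {z \<in> cent G (carrier G). \<exists>n. coprime n (p::nat) \<and> z [^] n = \<one>} G"
  by (rule tors_sub) auto

lemma (in group) Z_decomp:
  fixes p :: nat
  assumes fin: "finite (carrier G)" and p: "Factorial_Ring.prime p"
  shows "card (cent G (carrier G)) \<le>
     card {z \<in> cent G (carrier G). \<exists>n. (\<exists>j. n = p^j) \<and> z [^] n = \<one>} *
     card {z \<in> cent G (carrier G). \<exists>n. coprime n p \<and> z [^] n = \<one>}"
proof -
  define Z where "Z = cent G (carrier G)"
  define Zp where "Zp = {z \<in> Z. \<exists>n. (\<exists>j. n = p^j) \<and> z [^] n = \<one>}"
  define A where "A = {z \<in> Z. \<exists>n. coprime n p \<and> z [^] n = \<one>}"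
  have sZ: "subgroup Z G" using cent_subgroup Z_def by simp
  have o0: "order G \<noteq> 0" using fin one_closed by (auto simp: order_def)
  have nu: "\<not> is_unit p" using prime_gt_1_nat[OF p] by simp
  obtain q where q: "order G = p ^ multiplicity p (order G) * q" "\<not> p dvd q"
    using multiplicity_decompose'[OF o0 nu] by blast
  define a where "a = multiplicity p (order G)"
  have qa: "order G = p^a * q" using q(1) a_def by simp
  have cop: "coprime (p^a) q" using q(2) p by (simp add: prime_imp_coprime coprime_commute)
  obtain u w where uw: "p^a * u = q * w + gcd (p^a) q" using bezout_nat[of "p^a" q] p prime_gt_0_nat by auto
  then have uw': "p^a * u = Suc (q * w)" using cop by simp
  have "Z \<subseteq> (\<lambda>(x, y). x \<otimes> y) ` (Zp \<times> A)"
  proof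
    fix z assume zZ: "z \<in> Z"
    have zc: "z \<in> carrier G" using zZ Z_def by (simp add: cent_def)
    have zo: "z [^] order G = \<one>" using pow_order_eq_1[OF zc] .
    define z1 where "z1 = inv (z [^] (q * w))"
    define z2 where "z2 = z [^] (p^a * u)"
    have z1Z: "z1 \<in> Z" using z1_def subgroup_pow_closed[OF sZ zZ] subgroup.m_inv_closed[OF sZ] by simp
    have z2Z: "z2 \<in> Z" using z2_def subgroup_pow_closed[OF sZ zZ] by simp
    have "z1 [^] (p^a) = inv (z [^] (q * w * p^a))"
      using zc z1_def by (simp add: nat_pow_inv nat_pow_pow)
    also have "q * w * p^a = order G * w" using qa by simp
    finally have "z1 [^] (p^a) = inv ((z [^] order G) [^] w)" using zc by (simp add: nat_pow_pow)
    then have "z1 [^] (p^a) = \<one>" using zo by simp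
    then have z1Zp: "z1 \<in> Zp" using Zp_def z1Z by blast
    have "z2 [^] q = z [^] (p^a * u * q)"
      using zc z2_def by (simp add: nat_pow_pow)
    also have "p^a * u * q = order G * u" using qa by simp
    finally have "z2 [^] q = (z [^] order G) [^] u" using zc by (simp add: nat_pow_pow)
    then have "z2 [^] q = \<one>" using zo by simp
    then have z2A: "z2 \<in> A" using A_def z2Z q(2) p by (auto intro!: exI[of _ q] simp: prime_imp_coprime coprime_commute)
    have "z = z1 \<otimes> z2"
    proof -
      have "z2 = z [^] (q * w) \<otimes> z" using z2_def uw' zc by simp
      then show ?thesis using z1_def zc by (simp add: cancel_b)
    qed
    then show "z \<in> (\<lambda>(x, y). x \<otimes> y) ` (Zp \<times> A)" using z1Zp z2A by force
  qed
  moreover have "finite (Zp \<times> A)"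
  proof -
    have "Zp \<subseteq> carrier G" "A \<subseteq> carrier G" using Zp_def A_def Z_def by (auto simp: cent_def)
    then show ?thesis using finite_subset fin by blast
  qed
  ultimately have "card Z \<le> card ((\<lambda>(x, y). x \<otimes> y) ` (Zp \<times> A))"
    using card_mono finite_imageI by blast
  also have "\<dots> \<le> card (Zp \<times> A)" by (rule card_image_le) (use \<open>finite (Zp \<times> A)\<close> in simp)
  finally have "card Z \<le> card (Zp \<times> A)" .
  then show ?thesis using Z_def Zp_def A_def by (simp add: card_cartesian_product)
qed

lemma (in group) A_char:
  assumes fin: "finite (carrier G)" and phi: "\<phi> \<in> iso G G"
  shows "\<phi> ` {z \<in> cent G (carrier G). \<exists>n. coprime n (p::nat) \<and> z [^] n = \<one>} =
         {z \<in> cent G (carrier G). \<exists>n. coprime n p \<and> z [^] n = \<one>}"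
proof -
  define A where "A = {z \<in> cent G (carrier G). \<exists>n. coprime n p \<and> z [^] n = \<one>}"
  have hom: "\<phi> \<in> hom G G" and bij: "bij_betw \<phi> (carrier G) (carrier G)" using phi by (auto simp: iso_def)
  have Ac: "A \<subseteq> carrier G" using A_def by (auto simp: cent_def)
  have sub: "\<phi> ` A \<subseteq> A"
  proof
    fix y assume "y \<in> \<phi> ` A"
    then obtain z where z: "z \<in> A" "y = \<phi> z" by blast
    have zc: "z \<in> carrier G" using z Ac by blast
    obtain n where n: "coprime n p" "z [^] n = \<one>" using z A_def by blast
    have yc: "y \<in> carrier G" using z zc hom by (auto simp: hom_def)
    have "y \<otimes> g = g \<otimes> y" if g: "g \<in> carrier G" for g
    proof -
      have "g \<in> \<phi> ` carrier G" using bij g by (simp add: bij_betw_def)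
      then obtain g0 where g0: "g0 \<in> carrier G" "g = \<phi> g0" by blast
      have e: "z \<otimes> g0 = g0 \<otimes> z" using z(1) g0 A_def by (auto simp: cent_def)
      have "y \<otimes> g = \<phi> (z \<otimes> g0)" using hom_mult[OF hom zc g0(1)] z(2) g0(2) by simp
      also have "\<dots> = \<phi> (g0 \<otimes> z)" using e by simp
      also have "\<dots> = g \<otimes> y" using hom_mult[OF hom g0(1) zc] z(2) g0(2) by simp
      finally show ?thesis .
    qed
    then have "y \<in> cent G (carrier G)" using yc by (auto simp: cent_def)
    moreover have "y [^] n = \<one>"
    proof -
      have "y [^] n = \<phi> (z [^] n)" using hom_nat_pow[OF hom zc is_group is_group] z(2) by simp
      also have "\<dots> = \<one>" using n hom_one[OF hom is_group is_group] by simp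
      finally show ?thesis .
    qed
    ultimately show "y \<in> A" using A_def n by blast
  qed
  have "inj_on \<phi> (carrier G)" using bij by (simp add: bij_betw_def)
  then have "inj_on \<phi> A" using inj_on_subset Ac by blast
  then have ce: "card (\<phi> ` A) = card A" by (rule card_image)
  have fA: "finite A" using finite_subset[OF Ac fin] .
  have "\<phi> ` A = A" using card_subset_eq[OF fA sub ce] .
  then show ?thesis using A_def by simp
qed


context ext begin

lemma KN_sub:
  assumes N: "subgroup N H"
  shows "subgroup (K <#> N) H" "K \<subseteq> K <#> N" "N \<subseteq> K <#> N" "card (K <#> N) \<le> card K * card N"
proof -
  have Nc: "N \<subseteq> carrier H" using N subgroup.subset by blast
  have memI: "k \<otimes> n \<in> K <#> N" if "k \<in> K" "n \<in> N" for k n using that by (auto simp: set_mult_def)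
  have memE: "\<exists>k\<in>K. \<exists>n\<in>N. g = k \<otimes> n" if "g \<in> K <#> N" for g using that by (auto simp: set_mult_def)
  have Kn: "n \<otimes> k \<otimes> inv n \<in> K" if "k \<in> K" "n \<in> carrier H" for k n
    using normal_over_K[OF K_sub subset_refl that(2) that(1)] .
  show "subgroup (K <#> N) H"
  proof (rule H.subgroupI)
    show "K <#> N \<subseteq> carrier H" using K_carrier Nc by (auto simp: set_mult_def)
    have "\<one> \<otimes> \<one> \<in> K <#> N" using memI subgroup.one_closed[OF K_sub] subgroup.one_closed[OF N] by blast
    then show "K <#> N \<noteq> {}" by blast
  next
    fix g assume "g \<in> K <#> N"
    then obtain k n where kn: "k \<in> K" "n \<in> N" "g = k \<otimes> n" using memE by blast
    have kc: "k \<in> carrier H" and nc: "n \<in> carrier H" using kn K_carrier Nc by auto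
    have "inv g = (inv n \<otimes> inv k \<otimes> inv (inv n)) \<otimes> inv n"
      using kn kc nc by (simp add: H.inv_mult_group H.m_assoc)
    moreover have "inv n \<otimes> inv k \<otimes> inv (inv n) \<in> K"
      using Kn[of "inv k" "inv n"] subgroup.m_inv_closed[OF K_sub kn(1)] nc by simp
    moreover have "inv n \<in> N" using subgroup.m_inv_closed[OF N kn(2)] .
    ultimately show "inv g \<in> K <#> N" using memI by simp
  next
    fix g h assume "g \<in> K <#> N" "h \<in> K <#> N"
    then obtain k n k' n' where kn: "k \<in> K" "n \<in> N" "g = k \<otimes> n" "k' \<in> K" "n' \<in> N" "h = k' \<otimes> n'"
      using memE by meson
    have c: "k \<in> carrier H" "n \<in> carrier H" "k' \<in> carrier H" "n' \<in> carrier H" using kn K_carrier Nc by auto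
    have "g \<otimes> h = (k \<otimes> (n \<otimes> k' \<otimes> inv n)) \<otimes> (n \<otimes> n')"
      using kn c by (simp add: H.m_assoc H.cancel_b)
    moreover have "k \<otimes> (n \<otimes> k' \<otimes> inv n) \<in> K"
      using subgroup.m_closed[OF K_sub kn(1) Kn[OF kn(4) c(2)]] .
    moreover have "n \<otimes> n' \<in> N" using subgroup.m_closed[OF N kn(2) kn(5)] .
    ultimately show "g \<otimes> h \<in> K <#> N" using memI by simp
  qed
  show "K \<subseteq> K <#> N"
  proof
    fix k assume "k \<in> K"
    then have "k \<otimes> \<one> \<in> K <#> N" using memI subgroup.one_closed[OF N] by blast
    then show "k \<in> K <#> N" using \<open>k \<in> K\<close> K_carrier by auto
  qed
  show "N \<subseteq> K <#> N"
  proof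
    fix n assume "n \<in> N"
    then have "\<one> \<otimes> n \<in> K <#> N" using memI subgroup.one_closed[OF K_sub] by blast
    then show "n \<in> K <#> N" using \<open>n \<in> N\<close> Nc by auto
  qed
  have "K <#> N = (\<lambda>(k, n). k \<otimes> n) ` (K \<times> N)" by (auto simp: set_mult_def)
  moreover have "finite (K \<times> N)" using finK Nc finH finite_subset by blast
  ultimately show "card (K <#> N) \<le> card K * card N"
    using card_image_le by (metis card_cartesian_product)
qed

lemma lift_gen:
  assumes surj: "\<pi> ` carrier H = carrier Hbar" and Sb: "finite Sb" "Sb \<subseteq> carrier Hbar"
    and gen: "generate Hbar Sb = carrier Hbar"
  shows "\<exists>Xs. finite Xs \<and> Xs \<subseteq> carrier H \<and> card Xs \<le> card Sb \<and> generate H (K \<union> Xs) = carrier H"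
proof -
  define lift where "lift b = (SOME h. h \<in> carrier H \<and> \<pi> h = b)" for b
  have lift: "lift b \<in> carrier H \<and> \<pi> (lift b) = b" if "b \<in> carrier Hbar" for b
  proof -
    have "b \<in> \<pi> ` carrier H" using surj that by simp
    then have "\<exists>h. h \<in> carrier H \<and> \<pi> h = b" by (auto simp: image_iff)
    then show ?thesis unfolding lift_def by (rule someI_ex)
  qed
  define Xs where "Xs = lift ` Sb"
  have Xc: "Xs \<subseteq> carrier H"
  proof
    fix x assume "x \<in> Xs"
    then obtain b where "b \<in> Sb" "x = lift b" using Xs_def by blast
    then show "x \<in> carrier H" using lift[of b] Sb(2) by auto
  qed
  define G0 where "G0 = generate H (K \<union> Xs)"
  have KXc: "K \<union> Xs \<subseteq> carrier H" using K_carrier Xc by auto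
  have sG0: "subgroup G0 H" using H.generate_is_subgroup[OF KXc] G0_def by simp
  have KXG0: "K \<union> Xs \<subseteq> G0" unfolding G0_def by (auto intro: generate.incl)
  have simg: "subgroup (\<pi> ` G0) Hbar" using group_hom.subgroup_img_is_subgroup[OF gh sG0] .
  have "Sb \<subseteq> \<pi> ` G0"
  proof
    fix b assume b: "b \<in> Sb"
    then have "lift b \<in> G0" using KXG0 Xs_def by auto
    moreover have "\<pi> (lift b) = b" using lift[of b] b Sb(2) by blast
    ultimately show "b \<in> \<pi> ` G0" by (metis image_eqI)
  qed
  then have "generate Hbar Sb \<subseteq> \<pi> ` G0" by (rule Hb.generate_subgroup_incl[OF _ simg])
  then have "carrier Hbar \<subseteq> \<pi> ` G0" using gen by simp
  have "carrier H \<subseteq> G0"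
  proof
    fix g assume g: "g \<in> carrier H"
    then have "\<pi> g \<in> \<pi> ` G0" using pi_c \<open>carrier Hbar \<subseteq> \<pi> ` G0\<close> by blast
    then obtain g' where g': "g' \<in> G0" "\<pi> g' = \<pi> g" by (metis imageE)
    have g'c: "g' \<in> carrier H" using g' sG0 subgroup.subset by blast
    have "inv g' \<otimes> g \<in> G0" using same_img[OF g'c g g'(2)] KXG0 by blast
    moreover have "g = g' \<otimes> (inv g' \<otimes> g)" using g'c g by (simp add: H.cancel_a)
    ultimately show "g \<in> G0" using g'(1) subgroup.m_closed[OF sG0] by metis
  qed
  moreover have "G0 \<subseteq> carrier H" using sG0 subgroup.subset by blast
  ultimately have "generate H (K \<union> Xs) = carrier H" using G0_def by blast
  moreover have "card Xs \<le> card Sb" using Xs_def card_image_le[OF Sb(1)] by simp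
  moreover have "finite Xs" using Xs_def Sb by simp
  ultimately show ?thesis using Xc by blast
qed

end

lemma (in group) per_x:
  fixes p :: nat
  assumes fin: "finite (carrier G)" and p: "Factorial_Ring.prime p"
    and P: "subgroup P G" and abP: "\<forall>x\<in>P. \<forall>y\<in>P. x \<otimes> y = y \<otimes> x"
    and expP: "\<forall>x\<in>P. x [^] p = \<one>"
    and normP: "\<forall>g\<in>carrier G. \<forall>v\<in>P. g \<otimes> v \<otimes> inv g \<in> P"
    and x: "x \<in> carrier G"
  shows "\<exists>a k. 0 < k \<and> k \<le> card P \<and> (x [^] (p^a)) [^] k \<in> cent G P"
proof -
  have Pc: "P \<subseteq> carrier G" using P subgroup.subset by blast
  have o0: "order G \<noteq> 0" using fin one_closed by (auto simp: order_def)
  have nu: "\<not> is_unit p" using prime_gt_1_nat[OF p] by simp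
  obtain q where q: "order G = p ^ multiplicity p (order G) * q" "\<not> p dvd q"
    using multiplicity_decompose'[OF o0 nu] by blast
  define a where "a = multiplicity p (order G)"
  have qa: "order G = p^a * q" using q(1) a_def by simp
  define y where "y = x [^] (p^a)"
  have yc: "y \<in> carrier G" using x y_def by simp
  have yq: "y [^] q = \<one>" using y_def x qa pow_order_eq_1[OF x] by (simp add: nat_pow_pow)
  have q0: "q > 0" using qa o0 by (cases q) auto
  have cop: "coprime q p" using q(2) p by (simp add: prime_imp_coprime coprime_commute)
  define PG where "PG = G\<lparr>carrier := P\<rparr>"
  have gPG: "group PG" using subgroup.subgroup_is_group[OF P is_group] PG_def by simp
  have cPG: "comm_group PG"
    using group.group_comm_groupI[OF gPG] abP PG_def by simp
  define \<tau> where "\<tau> = (\<lambda>v. y \<otimes> v \<otimes> inv y)"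
  have tfun: "(\<tau> ^^ k) v = y [^] k \<otimes> v \<otimes> inv (y [^] k)" if "v \<in> carrier G" for k v
    using conj_funpow[OF yc that] \<tau>_def by simp
  have LA: "lin_aut PG \<tau> p q"
  proof (rule lin_aut.intro[OF cPG], rule lin_aut_axioms.intro)
    show "\<tau> \<in> hom PG PG"
    proof (rule homI)
      fix v assume "v \<in> carrier PG"
      then show "\<tau> v \<in> carrier PG" using normP yc \<tau>_def PG_def by simp
    next
      fix v w assume v: "v \<in> carrier PG" and w: "w \<in> carrier PG"
      have vc: "v \<in> carrier G" and wc: "w \<in> carrier G" using v w Pc PG_def by auto
      have "y \<otimes> (v \<otimes> w) \<otimes> inv y = (y \<otimes> v \<otimes> inv y) \<otimes> (y \<otimes> w \<otimes> inv y)"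
        using vc wc yc by (simp add: m_assoc cancel_b)
      then show "\<tau> (v \<otimes>\<^bsub>PG\<^esub> w) = \<tau> v \<otimes>\<^bsub>PG\<^esub> \<tau> w" using \<tau>_def PG_def by simp
    qed
    show "Factorial_Ring.prime p" by fact
    show "\<And>v. v \<in> carrier PG \<Longrightarrow> v [^]\<^bsub>PG\<^esub> p = \<one>\<^bsub>PG\<^esub>"
      using expP PG_def by (simp add: nat_pow_consistent[symmetric])
    show "q > 0" by fact
    show "coprime q p" by fact
    show "\<And>v. v \<in> carrier PG \<Longrightarrow> (\<tau> ^^ q) v = v"
    proof -
      fix v assume "v \<in> carrier PG"
      then have "v \<in> carrier G" using Pc PG_def by auto
      then show "(\<tau> ^^ q) v = v" using tfun yq by simp
    qed
    show "finite (carrier PG)" using fin Pc PG_def finite_subset by auto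
  qed
  interpret L: lin_aut PG \<tau> p q by (rule LA)
  obtain k where k: "k > 0" "k \<le> card (carrier PG)" "\<forall>v\<in>carrier PG. (\<tau>^^k) v = v"
    using L.order_bound by blast
  have "y [^] k \<in> cent G P"
  proof -
    have "y [^] k \<otimes> v = v \<otimes> y [^] k" if v: "v \<in> P" for v
    proof -
      have vc: "v \<in> carrier G" using v Pc by blast
      have "(\<tau>^^k) v = v" using k(3) v PG_def by simp
      then have "y [^] k \<otimes> v \<otimes> inv (y [^] k) = v" using tfun[OF vc, of k] by simp
      then have "y [^] k \<otimes> v \<otimes> inv (y [^] k) \<otimes> y [^] k = v \<otimes> y [^] k" by simp
      then show ?thesis using vc yc by (simp add: m_assoc)
    qed
    then show ?thesis using yc by (auto simp: cent_def)
  qed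
  then show ?thesis using k y_def PG_def by auto
qed


lemma main_aux:
  fixes F :: "'a monoid" and H :: "'b monoid" (structure) and Hbar :: "'c monoid"
    and i :: "'a \<Rightarrow> 'b" and \<pi> :: "'b \<Rightarrow> 'c"
    and p m r s :: nat and B e :: real and Fp :: "'a set"
  assumes "Factorial_Ring.prime p"
    and "group F" and "group H" and "group Hbar"
    and "finite (carrier F)" and "finite (carrier H)" and "finite (carrier Hbar)"
    and "i \<in> hom F H" and "inj_on i (carrier F)"
    and "\<pi> \<in> hom H Hbar" and "\<pi> ` carrier H = carrier Hbar"
    and "i ` carrier F = kernel H Hbar \<pi>"
    and "comm_group Hbar"
    and "\<exists>S. finite S \<and> S \<subseteq> carrier Hbar \<and> card S \<le> r \<and> generate Hbar S = carrier Hbar"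
    and "sylow_subgroup F p Fp" and "Fp \<lhd> F"
    and "F\<lparr>carrier := Fp\<rparr> \<cong> product_group {..<m} (\<lambda>_. integer_mod_group p)"
    and "B > 0" and "e > 0"
    and "real (order F) \<le> B * real (card Fp) powr e"
    and "\<exists>S. finite S \<and> S \<subseteq> carrier F \<and> card S \<le> s \<and> generate F (Fp \<union> S) = carrier F"
  shows "\<exists>A. characteristic_subgroup H A \<and> comm_group (H\<lparr>carrier := A\<rparr>) \<and> coprime (card A) p \<and>
           (\<forall>Hp. sylow_subgroup H p Hp \<longrightarrow>
              real (card (rcosets\<^bsub>H\<^esub> A)) \<le> B ^ (r + s + 1) * real (card Hp) powr (e * real (r + s + 1) + real r + 1))"
proof -
  have p: "Factorial_Ring.prime p" by fact
  have p1: "p > 1" using prime_gt_1_nat[OF p] .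
  interpret F: group F by fact
  interpret H: group H by fact
  interpret Hb: comm_group Hbar by fact
  have extI: "ext H Hbar \<pi>"
    by (rule ext.intro[OF assms(3) assms(13)]) (simp add: ext_axioms_def assms)
  interpret E: ext H Hbar \<pi> by (rule extI)
  have ghi: "group_hom F H i" by (simp add: group_hom_def group_hom_axioms_def assms)
  have Kdef: "i ` carrier F = E.K" using assms(12) .
  have cK: "card E.K = order F" using card_image[OF assms(9)] Kdef by (simp add: order_def)
  have sFp: "subgroup Fp F" and cFp: "\<exists>k. card Fp = p^k" and nd: "\<not> p dvd order F div card Fp"
    using assms(15) by (auto simp: sylow_subgroup_def)
  have Fpc: "Fp \<subseteq> carrier F" using sFp subgroup.subset by blast
  have abFp: "\<forall>x\<in>Fp. \<forall>y\<in>Fp. x \<otimes>\<^bsub>F\<^esub> y = y \<otimes>\<^bsub>F\<^esub> x"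
    and expFp: "\<forall>x\<in>Fp. x [^]\<^bsub>F\<^esub> p = \<one>\<^bsub>F\<^esub>"
    using iso_prod_facts[OF assms(2) sFp assms(17)] by auto
  have tors: "x \<in> Fp" if "x \<in> carrier F" "x [^]\<^bsub>F\<^esub> p = \<one>\<^bsub>F\<^esub>" for x
    using F.normal_sylow_torsion[OF assms(5) assms(16) p nd that] .
  define P where "P = i ` Fp"
  have sP: "subgroup P H" using group_hom.subgroup_img_is_subgroup[OF ghi sFp] P_def by simp
  have Pc: "P \<subseteq> carrier H" using sP subgroup.subset by blast
  have PK: "P \<subseteq> E.K" using Kdef Fpc P_def by auto
  have cP: "card P = card Fp" using card_image[OF inj_on_subset[OF assms(9) Fpc]] P_def by simp
  have imult: "i (a \<otimes>\<^bsub>F\<^esub> b) = i a \<otimes> i b" if "a \<in> carrier F" "b \<in> carrier F" for a b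
    using group_hom.hom_mult[OF ghi that] .
  have ipow: "i (a [^]\<^bsub>F\<^esub> (n::nat)) = i a [^] n" if "a \<in> carrier F" for a n
    using group_hom.hom_nat_pow[OF ghi that] .
  have ione: "i \<one>\<^bsub>F\<^esub> = \<one>" using group_hom.hom_one[OF ghi] .
  have abP: "\<forall>x\<in>P. \<forall>y\<in>P. x \<otimes> y = y \<otimes> x"
  proof (intro ballI)
    fix x y assume "x \<in> P" "y \<in> P"
    then obtain a b where ab: "a \<in> Fp" "b \<in> Fp" "x = i a" "y = i b" using P_def by blast
    then have "a \<in> carrier F" "b \<in> carrier F" using Fpc by auto
    then show "x \<otimes> y = y \<otimes> x" using ab abFp imult by metis
  qed
  have expP: "\<forall>x\<in>P. x [^] p = \<one>"
  proof
    fix x assume "x \<in> P"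
    then obtain a where a: "a \<in> Fp" "x = i a" using P_def by blast
    then have "a \<in> carrier F" using Fpc by auto
    then show "x [^] p = \<one>" using a expFp ipow ione by metis
  qed
  have normP: "\<forall>g\<in>carrier H. \<forall>v\<in>P. g \<otimes> v \<otimes> inv g \<in> P"
  proof (intro ballI)
    fix g v assume g: "g \<in> carrier H" and v: "v \<in> P"
    have vc: "v \<in> carrier H" using v Pc by blast
    have wK: "g \<otimes> v \<otimes> inv g \<in> E.K"
      using E.normal_over_K[OF E.K_sub subset_refl g] v PK by blast
    then obtain y where y: "y \<in> carrier F" "g \<otimes> v \<otimes> inv g = i y" using Kdef by (metis imageE)
    have "(g \<otimes> v \<otimes> inv g) [^] p = g \<otimes> v [^] p \<otimes> inv g" using H.conj_pow[OF g vc] .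
    also have "\<dots> = \<one>" using expP v g by simp
    finally have "i (y [^]\<^bsub>F\<^esub> p) = i \<one>\<^bsub>F\<^esub>" using y ipow ione by simp
    then have "y [^]\<^bsub>F\<^esub> p = \<one>\<^bsub>F\<^esub>" using assms(9) y(1) inj_onD by (metis F.nat_pow_closed F.one_closed)
    then have "y \<in> Fp" using tors y(1) by blast
    then show "g \<otimes> v \<otimes> inv g \<in> P" using y(2) P_def by simp
  qed
  define N where "N = cent H P"
  have sN: "subgroup N H" using H.cent_subgroup[OF Pc] N_def by simp
  define M where "M = E.K <#> N"
  have sM: "subgroup M H" and KM: "E.K \<subseteq> M" and NM: "N \<subseteq> M" and cM: "card M \<le> card E.K * card N"
    using E.KN_sub[OF sN] M_def by auto
  obtain Sb where Sb: "finite Sb" "Sb \<subseteq> carrier Hbar" "card Sb \<le> r" "generate Hbar Sb = carrier Hbar"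
    using assms(14) by blast
  obtain Xs where Xs: "finite Xs" "Xs \<subseteq> carrier H" "card Xs \<le> card Sb" "generate H (E.K \<union> Xs) = carrier H"
    using E.lift_gen[OF assms(11) Sb(1,2,4)] by blast
  obtain SF where SF: "finite SF" "SF \<subseteq> carrier F" "card SF \<le> s" "generate F (Fp \<union> SF) = carrier F"
    using assms(21) by blast
  define Y where "Y = i ` SF"
  have Yc: "Y \<subseteq> carrier H" using SF(2) Y_def hom_carrier[OF assms(8)] by auto
  have finY: "finite Y" using SF(1) Y_def by simp
  have cY: "card Y \<le> s" unfolding Y_def using card_image_le[OF SF(1), of i] SF(3) by linarith
  have KPY: "E.K = generate H (P \<union> Y)"
  proof -
    have "generate H (i ` (Fp \<union> SF)) = i ` generate F (Fp \<union> SF)"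
      using group_hom.generate_img[OF ghi] Fpc SF(2) by simp
    then show ?thesis using SF(4) Kdef P_def Y_def by (simp add: image_Un)
  qed
  define T where "T = Xs \<union> Y"
  have Tc: "T \<subseteq> carrier H" using Xs(2) Yc T_def by simp
  have finT: "finite T" using Xs(1) finY T_def by simp
  have cT: "card T \<le> r + s"
  proof -
    have "card T \<le> card Xs + card Y" using card_Un_le T_def by simp
    then show ?thesis using Xs(3) Sb(3) cY by simp
  qed
  have PTc: "P \<union> T \<subseteq> carrier H" using Pc Tc by simp
  have genAll: "generate H (P \<union> T) = carrier H"
  proof
    show "generate H (P \<union> T) \<subseteq> carrier H" using H.generate_incl[OF PTc] .
  next
    have sG1: "subgroup (generate H (P \<union> T)) H" using H.generate_is_subgroup[OF PTc] .
    have "E.K \<subseteq> generate H (P \<union> T)" using KPY H.mono_generate[of "P \<union> Y" "P \<union> T"] T_def by auto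
    moreover have "Xs \<subseteq> generate H (P \<union> T)" using T_def by (auto intro: generate.incl)
    ultimately have "generate H (E.K \<union> Xs) \<subseteq> generate H (P \<union> T)"
      using H.generate_subgroup_incl[OF _ sG1] by simp
    then show "carrier H \<subseteq> generate H (P \<union> T)" using Xs(4) by simp
  qed
  define Z where "Z = cent H (carrier H)"
  have NTZ: "N \<inter> cent H T \<subseteq> Z"
  proof
    fix g assume "g \<in> N \<inter> cent H T"
    then have "g \<in> cent H (P \<union> T)" using N_def by (auto simp: cent_def)
    then have "g \<in> cent H (generate H (P \<union> T))" using H.cent_generate[OF PTc] by blast
    then show "g \<in> Z" using genAll Z_def by simp
  qed
  have finZ: "finite Z" using Z_def assms(6) by (auto simp: cent_def)
  have K1: "card E.K \<ge> 1" using E.finK subgroup.one_closed[OF E.K_sub]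
    by (metis One_nat_def Suc_leI card_gt_0_iff empty_iff)
  have cN: "card N \<le> card E.K ^ (r + s) * card Z"
  proof -
    have "card N \<le> card E.K ^ card T * card (N \<inter> cent H T)" using E.C_iter[OF finT Tc sN] .
    also have "card (N \<inter> cent H T) \<le> card Z" using card_mono[OF finZ NTZ] .
    then have "card E.K ^ card T * card (N \<inter> cent H T) \<le> card E.K ^ card T * card Z" by simp
    also have "card E.K ^ card T \<le> card E.K ^ (r + s)" using power_increasing[OF cT K1] .
    then have "card E.K ^ card T * card Z \<le> card E.K ^ (r + s) * card Z" by simp
    finally show ?thesis .
  qed
  have hx: "\<forall>x\<in>Xs. \<exists>a k. 0 < k \<and> k \<le> card P \<and> (x [^] (p^a)) [^] k \<in> M"
  proof
    fix x assume "x \<in> Xs"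
    then have "x \<in> carrier H" using Xs(2) by blast
    then show "\<exists>a k. 0 < k \<and> k \<le> card P \<and> (x [^] (p^a)) [^] k \<in> M"
      using H.per_x[OF assms(6) p sP abP expP normP] NM N_def by blast
  qed
  obtain R where R: "subgroup R H" "M \<subseteq> R" "card R \<le> card P ^ card Xs * card M" "\<forall>x\<in>Xs. \<exists>j. x [^] (p^j) \<in> R"
    using E.R_iter[OF Xs(1,2) sM KM hx] by blast
  have KR: "E.K \<subseteq> R" using KM R(2) by blast
  have allp: "\<forall>g\<in>carrier H. \<exists>j. g [^] (p^j) \<in> R" using E.p_index[OF R(1) KR Xs(2) Xs(4) R(4)] .
  have Rc: "R \<subseteq> carrier H" using R(1) subgroup.subset by blast
  have dRH: "card R dvd card (carrier H)" using H.subgroup_card_dvd[OF R(1) H.subgroup_self Rc] .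
  have cH0: "card (carrier H) > 0" using assms(6) by (auto simp: card_gt_0_iff)
  define t1 where "t1 = multiplicity p (card (carrier H) div card R)"
  have idx: "card (carrier H) div card R = p ^ t1"
    unfolding t1_def
  proof (rule ppow)
    show "card (carrier H) div card R > 0" using dRH cH0 by (metis dvd_div_eq_0_iff gr0I less_irrefl)
    show "Factorial_Ring.prime p" by fact
    fix l assume l: "Factorial_Ring.prime l" "l dvd card (carrier H) div card R"
    show "l = p"
    proof (rule ccontr)
      assume lp: "l \<noteq> p"
      have "\<forall>x\<in>carrier H. \<exists>m::nat. coprime m l \<and> x [^] m \<in> R"
      proof
        fix x assume "x \<in> carrier H"
        then obtain j where "x [^] (p^j) \<in> R" using allp by blast
        moreover have "coprime (p^j) l" using primes_coprime[OF p l(1)] lp by simp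
        ultimately show "\<exists>m::nat. coprime m l \<and> x [^] m \<in> R" by blast
      qed
      then show False using H.no_prime_div[OF assms(6) l(1) R(1) H.subgroup_self Rc] l(2) by simp
    qed
  qed
  have cHR: "card (carrier H) = p^t1 * card R" using idx dRH by (metis dvd_div_mult_self mult.commute)
  define Zp where "Zp = {z \<in> Z. \<exists>n. (\<exists>j. n = p^j) \<and> z [^] n = \<one>}"
  define A where "A = {z \<in> Z. \<exists>n. coprime n p \<and> z [^] n = \<one>}"
  have sZp: "subgroup Zp H" using H.Zp_sub Zp_def Z_def by simp
  have sA: "subgroup A H" using H.A_sub A_def Z_def by simp
  have ZN: "Z \<subseteq> N" using Z_def N_def Pc by (auto simp: cent_def)
  have ZpR: "Zp \<subseteq> R" using Zp_def ZN NM R(2) by auto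
  have Zpc: "Zp \<subseteq> carrier H" using sZp subgroup.subset by blast
  have one_Zp: "\<one> \<in> Zp" using subgroup.one_closed[OF sZp] .
  define t2 where "t2 = multiplicity p (card Zp)"
  have finZp: "finite Zp" using Zpc assms(6) finite_subset by blast
  have cZp: "card Zp = p ^ t2"
    unfolding t2_def
  proof (rule ppow)
    show "card Zp > 0" using finZp one_Zp by (auto simp: card_gt_0_iff)
    show "Factorial_Ring.prime p" by fact
    fix l assume l: "Factorial_Ring.prime l" "l dvd card Zp"
    show "l = p"
    proof (rule ccontr)
      assume lp: "l \<noteq> p"
      have "\<forall>x\<in>Zp. \<exists>m::nat. coprime m l \<and> x [^] m \<in> {\<one>}"
      proof
        fix x assume "x \<in> Zp"
        then obtain j where "x [^] (p^j) = \<one>" using Zp_def by blast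
        moreover have "coprime (p^j) l" using primes_coprime[OF p l(1)] lp by simp
        ultimately show "\<exists>m::nat. coprime m l \<and> x [^] m \<in> {\<one>}" by blast
      qed
      then show False using H.no_prime_div[OF assms(6) l(1) H.triv_subgroup sZp] one_Zp l(2) by simp
    qed
  qed
  have cZ: "card Z \<le> card Zp * card A" using H.Z_decomp[OF assms(6) p] Z_def Zp_def A_def by simp
  have "p^t2 dvd card R" using H.subgroup_card_dvd[OF sZp R(1) ZpR] cZp by simp
  then have pdvd: "p^(t1+t2) dvd card (carrier H)" using cHR by (simp add: power_add)
  have Ac: "A \<subseteq> carrier H" using sA subgroup.subset by blast
  have cA0: "card A > 0" using subgroup.one_closed[OF sA] Ac assms(6) finite_subset by (auto simp: card_gt_0_iff)
  have P1: "card P \<ge> 1" using subgroup.one_closed[OF sP] Pc assms(6) finite_subset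
    by (metis One_nat_def Suc_leI card_gt_0_iff empty_iff)
  define f where "f = order F"
  have main_nat: "card (carrier H) \<le> p^(t1+t2) * (card P ^ r * f ^ (r+s+1)) * card A"
  proof -
    have "card P ^ card Xs \<le> card P ^ r" using power_increasing[OF _ P1] Xs(3) Sb(3) by simp
    have "card (carrier H) = p^t1 * card R" by (rule cHR)
    also have "\<dots> \<le> p^t1 * (card P ^ card Xs * card M)" using R(3) by simp
    also have "\<dots> \<le> p^t1 * (card P ^ r * card M)"
      using \<open>card P ^ card Xs \<le> card P ^ r\<close> by (simp add: mult_le_mono)
    also have "\<dots> \<le> p^t1 * (card P ^ r * (f * card N))" using cM cK f_def by simp
    also have "\<dots> \<le> p^t1 * (card P ^ r * (f * (f ^ (r + s) * card Z)))" using cN cK f_def by simp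
    also have "\<dots> \<le> p^t1 * (card P ^ r * (f * (f ^ (r + s) * (card Zp * card A))))" using cZ by simp
    also have "\<dots> = p^(t1+t2) * (card P ^ r * f ^ (r+s+1)) * card A" using cZp by (simp add: power_add mult_ac)
    finally show ?thesis .
  qed
  have lagA: "card (rcosets A) * card A = card (carrier H)" using H.lagrange[OF sA] by (simp add: order_def)
  have idxA: "card (rcosets A) \<le> p^(t1+t2) * (card P ^ r * f ^ (r+s+1))"
    using main_nat lagA cA0 by (metis mult_le_cancel2 linorder_not_le)
  have charA: "characteristic_subgroup H A"
    unfolding characteristic_subgroup_def
    using sA H.A_char[OF assms(6)] A_def Z_def by simp
  have commA: "comm_group (H\<lparr>carrier := A\<rparr>)"
  proof -
    interpret GA: group "H\<lparr>carrier := A\<rparr>" using subgroup.subgroup_is_group[OF sA H.is_group] .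
    show ?thesis
    proof (rule GA.group_comm_groupI)
      fix x y assume "x \<in> carrier (H\<lparr>carrier := A\<rparr>)" "y \<in> carrier (H\<lparr>carrier := A\<rparr>)"
      then have "x \<in> Z" "y \<in> carrier H" using A_def Ac by auto
      then show "x \<otimes>\<^bsub>H\<lparr>carrier := A\<rparr>\<^esub> y = y \<otimes>\<^bsub>H\<lparr>carrier := A\<rparr>\<^esub> x" using Z_def by (simp add: cent_def)
    qed
  qed
  have copA: "coprime (card A) p"
  proof -
    have "\<forall>x\<in>A. \<exists>m::nat. coprime m p \<and> x [^] m \<in> {\<one>}" using A_def by auto
    then have "\<not> p dvd card A div card {\<one>}"
      using H.no_prime_div[OF assms(6) p H.triv_subgroup sA] subgroup.one_closed[OF sA] by simp
    then show ?thesis using p by (simp add: prime_imp_coprime coprime_commute)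
  qed
  show ?thesis
  proof (intro exI[of _ A] conjI charA commA copA allI impI)
    fix Hp assume "sylow_subgroup H p Hp"
    then have sHp: "subgroup Hp H" and kH: "\<exists>k. card Hp = p^k" and ndH: "\<not> p dvd order H div card Hp"
      by (auto simp: sylow_subgroup_def)
    have Hpc: "Hp \<subseteq> carrier H" using sHp subgroup.subset by blast
    have dHp: "card Hp dvd card (carrier H)" using H.subgroup_card_dvd[OF sHp H.subgroup_self Hpc] .
    define c where "c = card (carrier H) div card Hp"
    have Hc: "card (carrier H) = card Hp * c" using dHp c_def by simp
    have copc: "coprime c p" using ndH c_def p by (simp add: order_def prime_imp_coprime coprime_commute)
    have Hp0: "card Hp > 0" using Hc cH0 by (metis gr0I mult_0)
    have ppdvd: "q dvd card Hp" if q: "q dvd card (carrier H)" "\<exists>t. q = p^t" for q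
    proof -
      obtain t where t: "q = p^t" using q(2) by blast
      have "coprime q c" using copc t by (simp add: coprime_commute)
      then show ?thesis using q(1) Hc by (metis coprime_dvd_mult_left_iff)
    qed
    have b1: "p^(t1+t2) \<le> card Hp" using ppdvd[OF pdvd] Hp0 dvd_imp_le by blast
    have "card Fp dvd card (carrier H)"
    proof -
      have "card Fp dvd order F" using F.subgroup_card_dvd[OF sFp F.subgroup_self Fpc] by (simp add: order_def)
      moreover have "card E.K dvd card (carrier H)" using H.subgroup_card_dvd[OF E.K_sub H.subgroup_self E.K_carrier] .
      ultimately show ?thesis using cK dvd_trans by metis
    qed
    then have b2: "card P \<le> card Hp" using ppdvd cFp cP Hp0 dvd_imp_le by metis
    define h where "h = real (card Hp)"
    have h1: "h \<ge> 1" using Hp0 h_def by simp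
    have "real (card (rcosets A)) \<le> real (p^(t1+t2) * (card P ^ r * f ^ (r+s+1)))"
      using idxA of_nat_mono by blast
    also have "\<dots> = real (p^(t1+t2)) * real (card P) ^ r * real f ^ (r+s+1)" by simp
    also have "\<dots> \<le> h * h ^ r * real f ^ (r+s+1)"
    proof -
      have "real (p^(t1+t2)) \<le> h" using b1 h_def by simp
      moreover have "real (card P) ^ r \<le> h ^ r" using b2 h_def by (simp add: power_mono)
      ultimately have "real (p^(t1+t2)) * real (card P) ^ r \<le> h * h ^ r"
        using h1 by (intro mult_mono) auto
      then show ?thesis by (intro mult_right_mono) auto
    qed
    also have "\<dots> \<le> h * h ^ r * (B * h powr e) ^ (r+s+1)"
    proof -
      have "real f \<le> B * real (card Fp) powr e" using assms(20) f_def by simp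
      also have "\<dots> \<le> B * h powr e"
        using b2 cP h_def assms(18) assms(19) by (simp add: powr_mono2)
      finally have "real f \<le> B * h powr e" .
      then have "real f ^ (r+s+1) \<le> (B * h powr e) ^ (r+s+1)" by (intro power_mono) auto
      then show ?thesis using h1 by (intro mult_left_mono) auto
    qed
    also have "\<dots> = B ^ (r + s + 1) * h powr (e * real (r + s + 1) + real r + 1)"
    proof -
      have h0: "h > 0" using h1 by simp
      have hp: "(h powr e) ^ n = h powr (e * real n)" for n
      proof -
        have "(h powr e) powr real n = (h powr e) ^ n" using h0 by (intro powr_realpow) simp
        moreover have "(h powr e) powr real n = h powr (e * real n)" by (rule powr_powr)
        ultimately show ?thesis by simp
      qed
      then have "(h powr e) ^ (r+s+1) = h powr (e * real (r+s+1))" .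
      moreover have "h * h ^ r = h powr (real r + 1)" using h0 by (simp add: powr_realpow[symmetric] powr_add)
      ultimately have "h * h ^ r * (B * h powr e) ^ (r+s+1) = B ^ (r+s+1) * (h powr (real r + 1) * h powr (e * real (r+s+1)))"
        by (simp add: power_mult_distrib mult_ac)
      also have "\<dots> = B ^ (r+s+1) * h powr (e * real (r + s + 1) + real r + 1)"
        using h0 by (simp add: powr_add[symmetric] add_ac)
      finally show ?thesis .
    qed
    finally show "real (card (rcosets\<^bsub>H\<^esub> A)) \<le> B ^ (r + s + 1) * real (card Hp) powr (e * real (r + s + 1) + real r + 1)"
      using h_def by simp
  qed
qed


theorem lemma2p12:
  fixes F :: "'a monoid" and H :: "'b monoid" and Hbar :: "'c monoid"
    and i :: "'a \<Rightarrow> 'b" and \<pi> :: "'b \<Rightarrow> 'c"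
    and p m r s :: nat and B e :: real and Fp :: "'a set"
  assumes "Factorial_Ring.prime p"
    and "group F" and "group H" and "group Hbar"
    and "finite (carrier F)" and "finite (carrier H)" and "finite (carrier Hbar)"
    and "i \<in> hom F H" and "inj_on i (carrier F)"
    and "\<pi> \<in> hom H Hbar" and "\<pi> ` carrier H = carrier Hbar"
    and "i ` carrier F = kernel H Hbar \<pi>"
    and "comm_group Hbar"
    and "\<exists>S. finite S \<and> S \<subseteq> carrier Hbar \<and> card S \<le> r \<and> generate Hbar S = carrier Hbar"
    and "sylow_subgroup F p Fp" and "Fp \<lhd> F"
    and "F\<lparr>carrier := Fp\<rparr> \<cong> product_group {..<m} (\<lambda>_. integer_mod_group p)"
    and "B > 0" and "e > 0"
    and "real (order F) \<le> B * real (card Fp) powr e"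
    and "\<exists>S. finite S \<and> S \<subseteq> carrier F \<and> card S \<le> s \<and> generate F (Fp \<union> S) = carrier F"
  shows "\<exists>A. characteristic_subgroup H A \<and> comm_group (H\<lparr>carrier := A\<rparr>) \<and> coprime (card A) p \<and>
           (\<forall>Hp. sylow_subgroup H p Hp \<longrightarrow>
              real (card (rcosets\<^bsub>H\<^esub> A)) \<le> B ^ (r + s + 1) * real (card Hp) powr (e * real (r + s + 1) + real r + 1))"
  using assms by (rule main_aux)

end
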